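(* Let $\mathbb{X}\subseteq\mathbb{P}^2$ be a $\Bbbk$-configuration of type $(d_1,\dots,d_s)$. Then $\Delta\mathbf{H}_\mathbb{X}(d_s-1)=t$, where $t$ is the largest integer such that $d_{s-t+1},\dots,d_s$ are consecutive integers (i.e. $d_{s-k}=d_s-k$ for $0\le k\le t-1$), and the number of lines in $\mathbb{P}^2$ containing $d_s$ points of $\mathbb{X}$ is at most $\Delta\mathbf{H}_\mathbb{X}(d_s-1)+1$.
   Context: $\Bbbk$ is an algebraically closed field and $R=\Bbbk[x_0,x_1,x_2]$. A $\Bbbk$-configuration of type $(d_1,\dots,d_s)$ is a finite set $\mathbb{X}\subseteq\mathbb{P}^2$ for which there exist integers $1\le d_1<\cdots<d_s$, subsets $\mathbb{X}_1,\dots,\mathbb{X}_s$ of $\mathbb{X}$ and distinct lines $\mathbb{L}_1,\dots,\mathbb{L}_s\subseteq\mathbb{P}^2$ such that (1) $\mathbb{X}=\bigcup_{i=1}^s\mathbb{X}_i$; (2) $|\mathbb{X}_i|=d_i$ and $\mathbb{X}_i\subseteq\mathbb{L}_i$ for each $i$; (3) for $1<i\le s$, $\mathbb{L}_i$ contains no point of $\mathbb{X}_j$ for any $j<i$. $I_\mathbb{X}\subseteq R$ is the homogeneous ideal of $\mathbb{X}$, $\mathbf{H}_\mathbb{X}(t)=\dim_\Bbbk R_t-\dim_\Bbbk(I_\mathbb{X})_t$, and $\Delta\mathbf{H}_\mathbb{X}(t)=\mathbf{H}_\mathbb{X}(t)-\mathbf{H}_\mathbb{X}(t-1)$ with $\mathbf{H}_\mathbb{X}(t)=0$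 for $t<0$. *)

theory Defs
  imports "HOL-Computational_Algebra.Polynomial" "HOL-Library.Function_Algebras"
begin

type_synonym 'a pt = "'a \<times> 'a \<times> 'a"

text \<open>Exponent vectors of monomials x0^a x1^b x2^c of degree t.\<close>
definition mono_exps :: "nat \<Rightarrow> (nat \<times> nat \<times> nat) set" where
  "mono_exps t = {(a, b, c). a + b + c = t}"

definition cscale :: "'a::field \<Rightarrow> (nat \<times> nat \<times> nat \<Rightarrow> 'a) \<Rightarrow> (nat \<times> nat \<times> nat \<Rightarrow> 'a)" where
  "cscale c f = (\<lambda>m. c * f m)"

text \<open>R_t: homogeneous forms of degree t, given by their coefficient functions.\<close>
definition forms :: "nat \<Rightarrow> (nat \<times> nat \<times> nat \<Rightarrow> 'a::field) set" where
  "forms t = {f. \<forall>m. m \<notin> mono_exps t \<longrightarrow> f m = 0}"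

definition eval_form :: "nat \<Rightarrow> (nat \<times> nat \<times> nat \<Rightarrow> 'a::field) \<Rightarrow> 'a pt \<Rightarrow> 'a" where
  "eval_form t f p = (case p of (x, y, z) \<Rightarrow>
     (\<Sum>(a, b, c)\<in>mono_exps t. f (a, b, c) * x ^ a * y ^ b * z ^ c))"

text \<open>(I_X)_t for X given by a set of homogeneous coordinate vectors.\<close>
definition ideal_deg :: "'a::field pt set \<Rightarrow> nat \<Rightarrow> (nat \<times> nat \<times> nat \<Rightarrow> 'a) set" where
  "ideal_deg X t = {f \<in> forms t. \<forall>p\<in>X. eval_form t f p = 0}"

definition hilb :: "'a::field pt set \<Rightarrow> nat \<Rightarrow> int" where
  "hilb X t = int (vector_space.dim cscale (forms t :: (nat \<times> nat \<times> nat \<Rightarrow> 'a) set))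
            - int (vector_space.dim cscale (ideal_deg X t))"

text \<open>First difference, with H(t) = 0 for t < 0.\<close>
definition dhilb :: "'a::field pt set \<Rightarrow> nat \<Rightarrow> int" where
  "dhilb X t = hilb X t - (if t = 0 then 0 else hilb X (t - 1))"

definition proportional :: "'a::field pt \<Rightarrow> 'a pt \<Rightarrow> bool" where
  "proportional u v \<longleftrightarrow> (\<exists>c. c \<noteq> 0 \<and> v = (c * fst u, c * fst (snd u), c * snd (snd u)))"

text \<open>A finite set of points of P^2, given by pairwise non-proportional nonzero representatives.\<close>
definition proj_point_set :: "'a::field pt set \<Rightarrow> bool" where
  "proj_point_set X \<longleftrightarrow> finite X \<and> (0, 0, 0) \<notin> X \<and>
     (\<forall>u\<in>X. \<forall>v\<in>X. proportional u v \<longrightarrow> u = v)"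

definition on_line :: "'a::field pt \<Rightarrow> 'a pt \<Rightarrow> bool" where
  "on_line l p \<longleftrightarrow> (case l of (l0, l1, l2) \<Rightarrow> case p of (x, y, z) \<Rightarrow> l0 * x + l1 * y + l2 * z = 0)"

text \<open>The line of P^2 with coefficient vector l, as the set of its (nonzero) coordinate vectors.\<close>
definition line_pts :: "'a::field pt \<Rightarrow> 'a pt set" where
  "line_pts l = {p. p \<noteq> (0, 0, 0) \<and> on_line l p}"

definition is_line :: "'a::field pt set \<Rightarrow> bool" where
  "is_line L \<longleftrightarrow> (\<exists>l. l \<noteq> (0, 0, 0) \<and> L = line_pts l)"

definition k_configuration ::
  "'a::field pt set \<Rightarrow> nat \<Rightarrow> (nat \<Rightarrow> nat) \<Rightarrow> bool" where
  "k_configuration X s d \<longleftrightarrow>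
     proj_point_set X \<and> 1 \<le> s \<and> 1 \<le> d 1 \<and> (\<forall>i. 1 \<le> i \<and> i < s \<longrightarrow> d i < d (i + 1)) \<and>
     (\<exists>Xs :: nat \<Rightarrow> 'a pt set. \<exists>Ls :: nat \<Rightarrow> 'a pt set.
        X = (\<Union>i\<in>{1..s}. Xs i) \<and>
        (\<forall>i\<in>{1..s}. is_line (Ls i) \<and> Xs i \<subseteq> X \<and> card (Xs i) = d i \<and> Xs i \<subseteq> Ls i) \<and>
        (\<forall>i\<in>{1..s}. \<forall>j\<in>{1..s}. i \<noteq> j \<longrightarrow> Ls i \<noteq> Ls j) \<and>
        (\<forall>i\<in>{1..s}. \<forall>j\<in>{1..s}. 1 < i \<and> j < i \<longrightarrow> Ls i \<inter> Xs j = {}))"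

definition consec_tail :: "nat \<Rightarrow> (nat \<Rightarrow> nat) \<Rightarrow> nat" where
  "consec_tail s d = (GREATEST t. t \<le> s \<and> (\<forall>k<t. d (s - k) = d s - k))"

end

theory Submission
  imports Defs
begin

lemma (in vector_space) span_disj_zero:
  assumes ind: "independent (A \<union> B)" and dj: "A \<inter> B = {}"
    and xa: "x \<in> span A" and xb: "x \<in> span B"
  shows "x = 0"
proof -
  obtain T1 r where T1: "finite T1" "T1 \<subseteq> A" "x = (\<Sum>a\<in>T1. r a *s a)"
    using xa unfolding span_explicit by blast
  obtain T2 q where T2: "finite T2" "T2 \<subseteq> B" "x = (\<Sum>a\<in>T2. q a *s a)"
    using xb unfolding span_explicit by blast
  define u where "u v = (if v \<in> T1 then r v else - q v)" for v
  have d: "T1 \<inter> T2 = {}" using T1 T2 dj by blast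
  have "(\<Sum>v\<in>T1 \<union> T2. u v *s v) = (\<Sum>v\<in>T1. u v *s v) + (\<Sum>v\<in>T2. u v *s v)"
    using T1 T2 d by (simp add: sum.union_disjoint)
  also have "(\<Sum>v\<in>T1. u v *s v) = x" using T1 by (simp add: u_def)
  also have "(\<Sum>v\<in>T2. u v *s v) = - x"
    using T2 d by (auto simp: u_def sum_negf[symmetric] intro!: sum.cong)
  finally have z: "(\<Sum>v\<in>T1 \<union> T2. u v *s v) = 0" by simp
  have "\<And>v. v \<in> T1 \<Longrightarrow> r v = 0"
    using independentD[OF ind _ _ z] T1 T2 by (force simp: u_def)
  then show ?thesis using T1 by simp
qed

lemma (in vector_space) card_le_dim:
  assumes "finite E" "independent I" "I \<subseteq> span E"
  shows "card I \<le> dim E"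
proof -
  obtain B where B: "B \<subseteq> span E" "independent B" "span E \<subseteq> span B" "card B = dim (span E)"
    using basis_exists by blast
  have "finite B" using independent_span_bound[OF assms(1) B(2)] B(1) by blast
  have "I \<subseteq> span B" using assms(3) B(3) by blast
  then have "card I \<le> card B" using independent_span_bound[OF \<open>finite B\<close> assms(2)] by blast
  then show ?thesis using B(4) by simp
qed

lemma (in vector_space_pair) rank_nullity:
  assumes lf: "Vector_Spaces.linear s1 s2 f" and fB: "finite B"
  shows "vs1.dim (vs1.span B) = vs1.dim {x \<in> vs1.span B. f x = 0} + vs2.dim (f ` vs1.span B)"
proof -
  let ?V = "vs1.span B"
  let ?K = "{x \<in> ?V. f x = 0}"
  obtain Bk where Bk: "Bk \<subseteq> ?K" "vs1.independent Bk" "?K \<subseteq> vs1.span Bk"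
    using vs1.maximal_independent_subset by blast
  obtain B' where B': "Bk \<subseteq> B'" "B' \<subseteq> ?V" "vs1.independent B'" "?V \<subseteq> vs1.span B'"
    using vs1.maximal_independent_subset_extend[of Bk ?V] Bk by blast
  have fB': "finite B'" using vs1.independent_span_bound[OF fB B'(3) B'(2)] by blast
  have spB': "vs1.span B' = ?V"
    using B'(2,4) vs1.span_mono[OF B'(2)] by (simp add: vs1.span_span subset_antisym)
  have dimV: "vs1.dim ?V = card B'" using vs1.dim_eq_card[OF spB' B'(3)] by simp
  have spK: "vs1.span Bk = vs1.span ?K"
  proof -
    have "vs1.subspace ?K"
      using linear_subspace_kernel[OF lf] vs1.subspace_inter[of ?V "{x. f x = 0}"]
      by (simp add: Collect_conj_eq Int_commute)
    then show ?thesis using Bk vs1.span_mono[OF Bk(1)] vs1.span_eq_iff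
      by (metis subset_antisym vs1.span_minimal vs1.span_span)
  qed
  have dimK: "vs1.dim ?K = card Bk" using vs1.dim_eq_card[OF spK Bk(2)] .
  define C where "C = B' - Bk"
  have injC: "inj_on f (vs1.span C)"
    unfolding linear_inj_on_iff_eq_0[OF lf vs1.subspace_span]
  proof (intro ballI impI)
    fix x assume x: "x \<in> vs1.span C" "f x = 0"
    have "x \<in> ?V" using x(1) vs1.span_mono[of C B'] spB' C_def by blast
    then have "x \<in> vs1.span Bk" using x Bk(3) by blast
    moreover have "vs1.independent (Bk \<union> C)" using B' C_def by (simp add: Un_absorb1 Un_Diff_cancel)
    ultimately show "x = 0" using vs1.span_disj_zero[of Bk C x] x C_def by blast
  qed
  have indC: "vs2.independent (f ` C)"
    using linear_independent_injective_image[OF lf _ injC] B'(3) C_def vs1.independent_mono by blast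
  have cardC: "card (f ` C) = card C"
    using card_image inj_on_subset[OF injC vs1.span_superset] by blast
  have "f ` ?V = vs2.span (f ` B')" using linear_span_image[OF lf, of B'] spB' by simp
  also have "vs2.span (f ` B') = vs2.span (f ` C)"
  proof -
    have "f ` B' \<subseteq> insert 0 (f ` C)" using Bk(1) B'(1) C_def by auto
    then have "vs2.span (f ` B') \<subseteq> vs2.span (f ` C)"
      by (metis vs2.span_insert_0 vs2.span_mono)
    moreover have "vs2.span (f ` C) \<subseteq> vs2.span (f ` B')" using C_def by (intro vs2.span_mono) auto
    ultimately show ?thesis by blast
  qed
  finally have "vs2.dim (f ` ?V) = card C"
    using vs2.dim_span_eq_card_independent[OF indC] cardC by simp
  moreover have "card B' = card Bk + card C"
    using fB' B'(1) C_def by (metis card_Diff_subset finite_subset card_mono le_add_diff_inverse)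
  ultimately show ?thesis using dimV dimK by simp
qed

definition fscale :: "'a::field \<Rightarrow> ('b \<Rightarrow> 'a) \<Rightarrow> ('b \<Rightarrow> 'a)" where
  "fscale c f = (\<lambda>x. c * f x)"

lemma vs_fscale: "vector_space (fscale :: 'a::field \<Rightarrow> ('b \<Rightarrow> 'a) \<Rightarrow> _)"
  by unfold_locales (auto simp: fscale_def algebra_simps fun_eq_iff)

interpretation fv: vector_space "fscale :: 'a::field \<Rightarrow> ('b \<Rightarrow> 'a) \<Rightarrow> _"
  by (rule vs_fscale)

lemma cscale_eq: "cscale = fscale"
  by (auto simp: cscale_def fscale_def fun_eq_iff)

lemma fscale_apply[simp]: "fscale c f x = c * f x" by (simp add: fscale_def)

lemma sum_fun_apply: "(sum g A) x = (\<Sum>a\<in>A. g a x)"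
  by (induction A rule: infinite_finite_induct) auto

definition mono_fun :: "nat \<times> nat \<times> nat \<Rightarrow> 'a::field pt \<Rightarrow> 'a" where
  "mono_fun m p = (case m of (a, b, c) \<Rightarrow> case p of (x, y, z) \<Rightarrow> x ^ a * y ^ b * z ^ c)"

definition restr :: "'b set \<Rightarrow> ('b \<Rightarrow> 'a::field) \<Rightarrow> 'b \<Rightarrow> 'a" where
  "restr Z v = (\<lambda>p. if p \<in> Z then v p else 0)"

definition MS :: "nat \<Rightarrow> ('a::field pt \<Rightarrow> 'a) set" where
  "MS u = mono_fun ` mono_exps u"

definition EE :: "'a::field pt set \<Rightarrow> nat \<Rightarrow> ('a pt \<Rightarrow> 'a) set" where
  "EE Z u = restr Z ` MS u"

lemma finite_mono_exps: "finite (mono_exps t)"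
proof -
  have "mono_exps t \<subseteq> {0..t} \<times> {0..t} \<times> {0..t}" by (auto simp: mono_exps_def)
  then show ?thesis by (rule finite_subset) auto
qed

lemma finite_EE: "finite (EE Z u)"
  by (simp add: EE_def MS_def finite_mono_exps)

lemma eval_form_alt: "eval_form t f p = (\<Sum>m\<in>mono_exps t. f m * mono_fun m p)"
  unfolding eval_form_def mono_fun_def
  by (cases p) (auto intro!: sum.cong simp: algebra_simps)

lemma linear_restr: "Vector_Spaces.linear fscale fscale (restr Z)"
  by (auto simp: Vector_Spaces.linear_iff vs_fscale restr_def fun_eq_iff)

definition delta :: "nat \<times> nat \<times> nat \<Rightarrow> nat \<times> nat \<times> nat \<Rightarrow> 'a::field" where
  "delta m = (\<lambda>m'. if m' = m then 1 else 0)"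

lemma forms_span: "(forms t :: (nat \<times> nat \<times> nat \<Rightarrow> 'a::field) set) = fv.span (delta ` mono_exps t)"
proof
  show "forms t \<subseteq> fv.span (delta ` mono_exps t :: (nat \<times> nat \<times> nat \<Rightarrow> 'a) set)"
  proof
    fix f :: "nat \<times> nat \<times> nat \<Rightarrow> 'a" assume f: "f \<in> forms t"
    have eq: "f = (\<Sum>m\<in>mono_exps t. fscale (f m) (delta m))"
    proof
      fix m'
      show "f m' = (\<Sum>m\<in>mono_exps t. fscale (f m) (delta m)) m'"
      proof (cases "m' \<in> mono_exps t")
        case True
        then show ?thesis using finite_mono_exps[of t]
          by (simp add: sum_fun_apply delta_def if_distrib cong: if_cong)
      next
        case False
        then have "f m' = 0" using f unfolding forms_def by blast
        then show ?thesis using False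
          by (auto simp: sum_fun_apply delta_def intro!: sum.neutral)
      qed
    qed
    have "(\<Sum>m\<in>mono_exps t. fscale (f m) (delta m)) \<in> fv.span (delta ` mono_exps t :: (nat \<times> nat \<times> nat \<Rightarrow> 'a) set)"
      by (intro fv.span_sum fv.span_scale fv.span_base) auto
    then show "f \<in> fv.span (delta ` mono_exps t :: (nat \<times> nat \<times> nat \<Rightarrow> 'a) set)" using eq by metis
  qed
  show "fv.span (delta ` mono_exps t :: (nat \<times> nat \<times> nat \<Rightarrow> 'a) set) \<subseteq> forms t"
  proof (rule fv.span_minimal)
    show "delta ` mono_exps t \<subseteq> forms t" by (auto simp: forms_def delta_def)
    show "fv.subspace (forms t)"
      by (auto simp: fv.subspace_def forms_def)
  qed
qed

definition phi :: "'a::field pt set \<Rightarrow> nat \<Rightarrow> (nat \<times> nat \<times> nat \<Rightarrow> 'a) \<Rightarrow> 'a pt \<Rightarrow> 'a" where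
  "phi X t f = restr X (eval_form t f)"

lemma linear_phi: "Vector_Spaces.linear fscale fscale (phi X t)"
  by (auto simp: Vector_Spaces.linear_iff vs_fscale restr_def fun_eq_iff phi_def eval_form_alt
      sum.distrib sum_distrib_left algebra_simps)

lemma phi_delta: fixes X :: "'a::field pt set" assumes "m \<in> mono_exps t" shows "phi X t (delta m) = restr X (mono_fun m)"
proof -
  have "eval_form t (delta m) p = (mono_fun m p :: 'a)" for p
  proof -
    have "eval_form t (delta m) p = (\<Sum>m'\<in>mono_exps t. if m' = m then mono_fun m p else 0)"
      unfolding eval_form_alt by (intro sum.cong) (auto simp: delta_def)
    also have "\<dots> = mono_fun m p" using assms finite_mono_exps[of t] by simp
    finally show ?thesis .
  qed
  then have "eval_form t (delta m) = (mono_fun m :: 'a pt \<Rightarrow> 'a)" by (rule ext)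
  then show ?thesis by (simp add: phi_def)
qed

lemma hilb_eq: fixes X :: "'a::field pt set" shows "hilb X t = int (fv.dim (EE X t))"
proof -
  interpret vp: vector_space_pair "fscale :: 'a \<Rightarrow> (nat \<times> nat \<times> nat \<Rightarrow> 'a) \<Rightarrow> _"
      "fscale :: 'a \<Rightarrow> ('a pt \<Rightarrow> 'a) \<Rightarrow> _"
    by unfold_locales
  define D where "D = (delta ` mono_exps t :: (nat \<times> nat \<times> nat \<Rightarrow> 'a) set)"
  have rn: "fv.dim (fv.span D) =
     fv.dim {x \<in> fv.span D. phi X t x = 0} +
     fv.dim (phi X t ` fv.span D)" unfolding D_def
    by (rule vp.rank_nullity[OF linear_phi finite_imageI[OF finite_mono_exps]])
  have ker: "{x \<in> fv.span (delta ` mono_exps t). phi X t x = 0} = ideal_deg X t"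
    unfolding forms_span[symmetric] ideal_deg_def
    by (auto simp: phi_def restr_def fun_eq_iff)
  have img: "phi X t ` fv.span (delta ` mono_exps t) = fv.span (EE X t)"
  proof -
    have "phi X t ` fv.span (delta ` mono_exps t) = fv.span (phi X t ` delta ` mono_exps t)"
      using vp.linear_span_image[OF linear_phi] by simp
    also have "phi X t ` delta ` mono_exps t = EE X t"
      by (auto simp: EE_def MS_def phi_delta image_image intro!: image_cong)
    finally show ?thesis .
  qed
  show ?thesis
    proof -
    have "fv.dim (forms t :: (nat \<times> nat \<times> nat \<Rightarrow> 'a) set) = fv.dim (fv.span D)"
      by (subst forms_span) (simp add: D_def)
    then show ?thesis
      unfolding hilb_def cscale_eq using rn ker img D_def by simp
  qed
qed

definition lf :: "'a::field pt \<Rightarrow> 'a pt \<Rightarrow> 'a" where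
  "lf l p = (case l of (l0, l1, l2) \<Rightarrow> case p of (x, y, z) \<Rightarrow> l0 * x + l1 * y + l2 * z)"

definition mulf :: "'a::field pt \<Rightarrow> ('a pt \<Rightarrow> 'a) \<Rightarrow> 'a pt \<Rightarrow> 'a" where
  "mulf l v = (\<lambda>p. lf l p * v p)"

definition SS :: "nat \<Rightarrow> ('a::field pt \<Rightarrow> 'a) set" where
  "SS u = fv.span (MS u)"

lemma linear_mulf: "Vector_Spaces.linear fscale fscale (mulf l)"
  by (auto simp: Vector_Spaces.linear_iff vs_fscale mulf_def fun_eq_iff algebra_simps)

lemma mono_in_MS: "a + b + c = u \<Longrightarrow> mono_fun (a, b, c) \<in> MS u"
  by (auto simp: MS_def mono_exps_def)

lemma mult_mono:
  assumes "m \<in> mono_exps u" shows "mulf l (mono_fun m) \<in> SS (Suc u)"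
proof -
  obtain a b c where m: "m = (a, b, c)" by (cases m) auto
  obtain l0 l1 l2 where l: "l = (l0, l1, l2)" by (cases l) auto
  have abc: "a + b + c = u" using assms m by (simp add: mono_exps_def)
  have eq: "mulf l (mono_fun m) = fscale l0 (mono_fun (Suc a, b, c)) + fscale l1 (mono_fun (a, Suc b, c))
     + fscale l2 (mono_fun (a, b, Suc c))"
    by (auto simp: fun_eq_iff mulf_def lf_def mono_fun_def m l algebra_simps)
  show ?thesis unfolding eq SS_def
    using abc by (intro fv.span_add fv.span_scale fv.span_base mono_in_MS) auto
qed

lemma mult_SS: assumes "v \<in> SS u" shows "mulf l v \<in> SS (Suc u)"
proof -
  have "SS u \<subseteq> {v. mulf l v \<in> SS (Suc u)}"
    unfolding SS_def
  proof (rule fv.span_minimal)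
    show "MS u \<subseteq> {v. mulf l v \<in> fv.span (MS (Suc u))}"
      using mult_mono[of _ u l] by (auto simp: MS_def SS_def)
    show "fv.subspace {v. mulf l v \<in> fv.span (MS (Suc u))}"
      unfolding fv.subspace_def
    proof (intro conjI allI impI ballI)
      show "0 \<in> {v. mulf l v \<in> fv.span (MS (Suc u))}"
        using fv.span_zero by (simp add: mulf_def zero_fun_def)
      fix x y assume "x \<in> {v. mulf l v \<in> fv.span (MS (Suc u))}" "y \<in> {v. mulf l v \<in> fv.span (MS (Suc u))}"
      then show "x + y \<in> {v. mulf l v \<in> fv.span (MS (Suc u))}"
        using fv.span_add[of "mulf l x" _ "mulf l y"] by (simp add: mulf_def algebra_simps plus_fun_def)
    next
      fix c x assume "x \<in> {v. mulf l v \<in> fv.span (MS (Suc u))}"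
      then show "fscale c x \<in> {v. mulf l v \<in> fv.span (MS (Suc u))}"
        using fv.span_scale[of "mulf l x" _ c] by (simp add: mulf_def fscale_def algebra_simps)
    qed
  qed
  then show ?thesis using assms by blast
qed

lemma one_SS: "(\<lambda>p. 1) \<in> (SS 0 :: ('a::field pt \<Rightarrow> 'a) set)"
proof -
  have e: "mono_fun (0, 0, 0) = (\<lambda>p::'a pt. 1::'a)" by (auto simp: mono_fun_def fun_eq_iff)
  have "(mono_fun (0, 0, 0) :: 'a pt \<Rightarrow> 'a) \<in> MS 0" by (rule mono_in_MS) simp
  then have "(mono_fun (0, 0, 0) :: 'a pt \<Rightarrow> 'a) \<in> SS 0" unfolding SS_def by (rule fv.span_base)
  then show ?thesis using e by simp
qed

lemma pow_mult: "v \<in> SS a \<Longrightarrow> (\<lambda>p. lf l p ^ k * v p) \<in> SS (a + k)"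
proof (induction k)
  case 0 then show ?case by simp
next
  case (Suc k)
  have "mulf l (\<lambda>p. lf l p ^ k * v p) \<in> SS (Suc (a + k))" using mult_SS Suc by blast
  moreover have "mulf l (\<lambda>p. lf l p ^ k * v p) = (\<lambda>p. lf l p ^ Suc k * v p)"
    by (auto simp: mulf_def fun_eq_iff algebra_simps)
  ultimately show ?case by simp
qed

lemma prod_mult: "finite F \<Longrightarrow> v \<in> SS a \<Longrightarrow> (\<lambda>p. (\<Prod>q\<in>F. lf (g q) p) * v p) \<in> SS (a + card F)"
proof (induction F rule: finite_induct)
  case empty then show ?case by simp
next
  case (insert x F)
  have "mulf (g x) (\<lambda>p. (\<Prod>q\<in>F. lf (g q) p) * v p) \<in> SS (Suc (a + card F))"
    using mult_SS insert by blast
  moreover have "mulf (g x) (\<lambda>p. (\<Prod>q\<in>F. lf (g q) p) * v p) = (\<lambda>p. (\<Prod>q\<in>insert x F. lf (g q) p) * v p)"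
    using insert by (auto simp: mulf_def fun_eq_iff algebra_simps)
  ultimately show ?case using insert by simp
qed

lemma restr_SS: "restr Z ` SS u = fv.span (EE Z u)"
proof -
  interpret vp: vector_space_pair "fscale :: 'a::field \<Rightarrow> ('a pt \<Rightarrow> 'a) \<Rightarrow> _" "fscale :: 'a \<Rightarrow> ('a pt \<Rightarrow> 'a) \<Rightarrow> _"
    by unfold_locales
  show ?thesis unfolding SS_def EE_def using vp.linear_span_image[OF linear_restr] by simp
qed

lemma restr_mulf_Y:
  assumes "\<forall>y\<in>Y. lf l y = 0"
  shows "restr (X' \<union> Y) (mulf l w) = mulf l (restr X' w)"
  using assms by (auto simp: restr_def mulf_def fun_eq_iff)

lemma span_sub_span: "A \<subseteq> fv.span C \<Longrightarrow> fv.span A \<subseteq> fv.span C"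
  by (metis fv.span_mono fv.span_span)

lemma div_z:
  fixes l0 l1 l2 :: "'a::field"
  assumes l2: "l2 \<noteq> 0"
  shows "\<forall>a b. a + b + c = Suc u \<longrightarrow> mono_fun (a, b, c) \<in>
     fv.span (mulf (l0, l1, l2) ` MS u \<union> mono_fun ` {m \<in> mono_exps (Suc u). snd (snd m) = 0})"
proof (induction c)
  case 0 show ?case
  proof (intro allI impI)
    fix a b assume "a + b + 0 = Suc u"
    then have "(a, b, 0) \<in> {m \<in> mono_exps (Suc u). snd (snd m) = 0}" by (simp add: mono_exps_def)
    then show "mono_fun (a, b, 0) \<in> fv.span (mulf (l0, l1, l2) ` MS u \<union> mono_fun ` {m \<in> mono_exps (Suc u). snd (snd m) = 0})"
      by (intro fv.span_base) blast
  qed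
next
  case (Suc c)
  show ?case
  proof (intro allI impI)
    fix a b assume h: "a + b + Suc c = Suc u"
    let ?S = "fv.span (mulf (l0, l1, l2) ` MS u \<union> mono_fun ` {m \<in> mono_exps (Suc u). snd (snd m) = 0})"
    have e: "mono_fun (a, b, Suc c) = fscale (1 / l2) (mulf (l0, l1, l2) (mono_fun (a, b, c)))
        - fscale (l0 / l2) (mono_fun (Suc a, b, c)) - fscale (l1 / l2) (mono_fun (a, Suc b, c))"
      using l2 by (auto simp: fun_eq_iff mulf_def lf_def mono_fun_def field_simps)
    have m1: "mulf (l0, l1, l2) (mono_fun (a, b, c)) \<in> ?S"
      using h by (intro fv.span_base) (auto intro!: mono_in_MS)
    have m2: "mono_fun (Suc a, b, c) \<in> ?S" by (rule Suc.IH[rule_format]) (use h in simp)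
    have m3: "mono_fun (a, Suc b, c) \<in> ?S" by (rule Suc.IH[rule_format]) (use h in simp)
    show "mono_fun (a, b, Suc c) \<in> ?S"
      unfolding e by (intro fv.span_diff fv.span_scale m1 m2 m3)
  qed
qed

lemma div_y:
  fixes l0 l1 l2 :: "'a::field"
  assumes l1: "l1 \<noteq> 0"
  shows "\<forall>a c. a + b + c = Suc u \<longrightarrow> mono_fun (a, b, c) \<in>
     fv.span (mulf (l0, l1, l2) ` MS u \<union> mono_fun ` {m \<in> mono_exps (Suc u). fst (snd m) = 0})"
proof (induction b)
  case 0 show ?case
  proof (intro allI impI)
    fix a c assume "a + 0 + c = Suc u"
    then have "(a, 0, c) \<in> {m \<in> mono_exps (Suc u). fst (snd m) = 0}" by (simp add: mono_exps_def)
    then show "mono_fun (a, 0, c) \<in> fv.span (mulf (l0, l1, l2) ` MS u \<union> mono_fun ` {m \<in> mono_exps (Suc u). fst (snd m) = 0})"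
      by (intro fv.span_base) blast
  qed
next
  case (Suc b)
  show ?case
  proof (intro allI impI)
    fix a c assume h: "a + Suc b + c = Suc u"
    let ?S = "fv.span (mulf (l0, l1, l2) ` MS u \<union> mono_fun ` {m \<in> mono_exps (Suc u). fst (snd m) = 0})"
    have e: "mono_fun (a, Suc b, c) = fscale (1 / l1) (mulf (l0, l1, l2) (mono_fun (a, b, c)))
        - fscale (l0 / l1) (mono_fun (Suc a, b, c)) - fscale (l2 / l1) (mono_fun (a, b, Suc c))"
      using l1 by (auto simp: fun_eq_iff mulf_def lf_def mono_fun_def field_simps)
    have m1: "mulf (l0, l1, l2) (mono_fun (a, b, c)) \<in> ?S"
      using h by (intro fv.span_base) (auto intro!: mono_in_MS)
    have m2: "mono_fun (Suc a, b, c) \<in> ?S" by (rule Suc.IH[rule_format]) (use h in simp)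
    have m3: "mono_fun (a, b, Suc c) \<in> ?S" by (rule Suc.IH[rule_format]) (use h in simp)
    show "mono_fun (a, Suc b, c) \<in> ?S"
      unfolding e by (intro fv.span_diff fv.span_scale m1 m2 m3)
  qed
qed

lemma div_x:
  fixes l0 l1 l2 :: "'a::field"
  assumes l0: "l0 \<noteq> 0"
  shows "\<forall>b c. a + b + c = Suc u \<longrightarrow> mono_fun (a, b, c) \<in>
     fv.span (mulf (l0, l1, l2) ` MS u \<union> mono_fun ` {m \<in> mono_exps (Suc u). fst m = 0})"
proof (induction a)
  case 0 show ?case
  proof (intro allI impI)
    fix b c assume "0 + b + c = Suc u"
    then have "(0, b, c) \<in> {m \<in> mono_exps (Suc u). fst m = 0}" by (simp add: mono_exps_def)
    then show "mono_fun (0, b, c) \<in> fv.span (mulf (l0, l1, l2) ` MS u \<union> mono_fun ` {m \<in> mono_exps (Suc u). fst m = 0})"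
      by (intro fv.span_base) blast
  qed
next
  case (Suc a)
  show ?case
  proof (intro allI impI)
    fix b c assume h: "Suc a + b + c = Suc u"
    let ?S = "fv.span (mulf (l0, l1, l2) ` MS u \<union> mono_fun ` {m \<in> mono_exps (Suc u). fst m = 0})"
    have e: "mono_fun (Suc a, b, c) = fscale (1 / l0) (mulf (l0, l1, l2) (mono_fun (a, b, c)))
        - fscale (l1 / l0) (mono_fun (a, Suc b, c)) - fscale (l2 / l0) (mono_fun (a, b, Suc c))"
      using l0 by (auto simp: fun_eq_iff mulf_def lf_def mono_fun_def field_simps)
    have m1: "mulf (l0, l1, l2) (mono_fun (a, b, c)) \<in> ?S"
      using h by (intro fv.span_base) (auto intro!: mono_in_MS)
    have m2: "mono_fun (a, Suc b, c) \<in> ?S" by (rule Suc.IH[rule_format]) (use h in simp)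
    have m3: "mono_fun (a, b, Suc c) \<in> ?S" by (rule Suc.IH[rule_format]) (use h in simp)
    show "mono_fun (Suc a, b, c) \<in> ?S"
      unfolding e by (intro fv.span_diff fv.span_scale m1 m2 m3)
  qed
qed

lemma card_sub_le: "A \<subseteq> f ` {0..n} \<Longrightarrow> card A \<le> n + 1"
proof -
  assume "A \<subseteq> f ` {0..n}"
  then have "card A \<le> card (f ` {0..n})" by (intro card_mono) auto
  also have "\<dots> \<le> card {0..n}" by (rule card_image_le) simp
  finally show ?thesis by simp
qed

lemma division:
  fixes l :: "'a::field pt"
  assumes "l \<noteq> (0, 0, 0)"
  shows "\<exists>T. finite T \<and> card T \<le> Suc u + 1 \<and> MS (Suc u) \<subseteq> fv.span (mulf l ` MS u \<union> T)"
proof -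
  obtain l0 l1 l2 where l: "l = (l0, l1, l2)" by (cases l) auto
  have fin: "finite {m \<in> mono_exps n. P m}" for n P using finite_mono_exps by simp
  have gen: "\<exists>T. finite T \<and> card T \<le> Suc u + 1 \<and> MS (Suc u) \<subseteq> fv.span (mulf l ` MS u \<union> T)"
    if Z: "Z \<subseteq> g ` {0..Suc u}" "finite Z"
     and H: "\<And>a b c. a + b + c = Suc u \<Longrightarrow> mono_fun (a, b, c) \<in> fv.span (mulf l ` MS u \<union> mono_fun ` Z)"
    for Z :: "(nat \<times> nat \<times> nat) set" and g
  proof (intro exI conjI)
    show "finite (mono_fun ` Z :: ('a pt \<Rightarrow> 'a) set)" using Z by simp
    have "card (mono_fun ` Z :: ('a pt \<Rightarrow> 'a) set) \<le> card Z" using Z card_image_le by blast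
    also have "\<dots> \<le> Suc u + 1" using card_sub_le[OF Z(1)] .
    finally show "card (mono_fun ` Z :: ('a pt \<Rightarrow> 'a) set) \<le> Suc u + 1" .
    show "MS (Suc u) \<subseteq> fv.span (mulf l ` MS u \<union> mono_fun ` Z)"
    proof
      fix v :: "'a pt \<Rightarrow> 'a" assume "v \<in> MS (Suc u)"
      then obtain a b c where "v = mono_fun (a, b, c)" "a + b + c = Suc u"
        by (auto simp: MS_def mono_exps_def)
      then show "v \<in> fv.span (mulf l ` MS u \<union> mono_fun ` Z)" using H by simp
    qed
  qed
  consider "l2 \<noteq> 0" | "l1 \<noteq> 0" | "l0 \<noteq> 0" using assms l by auto
  then show ?thesis
  proof cases
    case 1
    show ?thesis
    proof (rule gen)
      show "{m \<in> mono_exps (Suc u). snd (snd m) = 0} \<subseteq> (\<lambda>a. (a, Suc u - a, 0)) ` {0..Suc u}"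
        by (auto simp: mono_exps_def image_iff)
    qed (use fin div_z[OF 1, of _ u l0 l1] l in auto)
  next
    case 2
    show ?thesis
    proof (rule gen)
      show "{m \<in> mono_exps (Suc u). fst (snd m) = 0} \<subseteq> (\<lambda>a. (a, 0, Suc u - a)) ` {0..Suc u}"
        by (auto simp: mono_exps_def image_iff)
    qed (use fin div_y[OF 2, of _ u l0 l2] l in auto)
  next
    case 3
    show ?thesis
    proof (rule gen)
      show "{m \<in> mono_exps (Suc u). fst m = 0} \<subseteq> (\<lambda>a. (0, a, Suc u - a)) ` {0..Suc u}"
        by (auto simp: mono_exps_def image_iff)
    qed (use fin div_x[OF 3, of _ u l1 l2] l in auto)
  qed
qed

definition ind :: "'b \<Rightarrow> 'b \<Rightarrow> 'a::field" where
  "ind p = (\<lambda>q. if q = p then 1 else 0)"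

lemma dim_EE_le_card:
  fixes Z :: "'a::field pt set"
  assumes "finite Z" shows "fv.dim (EE Z u) \<le> card Z"
proof -
  have "EE Z u \<subseteq> fv.span (ind ` Z)"
  proof
    fix w :: "'a pt \<Rightarrow> 'a" assume "w \<in> EE Z u"
    then obtain v where w: "w = restr Z v" by (auto simp: EE_def)
    have "w = (\<Sum>p\<in>Z. fscale (v p) (ind p))"
      using assms by (auto simp: w restr_def fun_eq_iff sum_fun_apply ind_def if_distrib cong: if_cong)
    also have "\<dots> \<in> fv.span (ind ` Z)"
      by (intro fv.span_sum fv.span_scale fv.span_base) auto
    finally show "w \<in> fv.span (ind ` Z)" .
  qed
  then have "fv.dim (EE Z u) \<le> card (ind ` Z :: ('a pt \<Rightarrow> 'a) set)"
    using fv.dim_le_card assms by blast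
  also have "\<dots> \<le> card Z" by (rule card_image_le[OF assms])
  finally show ?thesis .
qed

lemma dim_EE0: "fv.dim (EE Z 0) \<le> 1"
proof -
  have "mono_exps 0 = {(0, 0, 0)}" by (auto simp: mono_exps_def)
  then have "card (EE Z 0) \<le> 1" by (simp add: EE_def MS_def)
  then show ?thesis using fv.dim_le_card'[OF finite_EE[of Z 0]] by linarith
qed

lemma L4:
  fixes l :: "'a::field pt"
  assumes l: "l \<noteq> (0, 0, 0)" and Y: "\<forall>y\<in>Y. lf l y = 0"
  shows "fv.dim (EE (X' \<union> Y) (Suc u)) \<le> fv.dim (EE X' u) + (Suc u + 1)"
proof -
  obtain T where T: "finite T" "card T \<le> Suc u + 1" "MS (Suc u) \<subseteq> fv.span (mulf l ` MS u \<union> T)"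
    using division[OF l] by blast
  obtain B where B: "B \<subseteq> EE X' u" "fv.independent B" "EE X' u \<subseteq> fv.span B" "card B = fv.dim (EE X' u)"
    using fv.basis_exists by blast
  have fB: "finite B" using B(1) finite_EE finite_subset by blast
  let ?W = "mulf l ` B \<union> restr (X' \<union> Y) ` T"
  interpret vp: vector_space_pair "fscale :: 'a::field \<Rightarrow> ('a pt \<Rightarrow> 'a) \<Rightarrow> _" "fscale :: 'a \<Rightarrow> ('a pt \<Rightarrow> 'a) \<Rightarrow> _"
    by unfold_locales
  have sub1: "restr (X' \<union> Y) ` mulf l ` MS u \<subseteq> fv.span ?W"
  proof
    fix x assume "x \<in> restr (X' \<union> Y) ` mulf l ` MS u"
    then obtain w where w: "w \<in> MS u" "x = restr (X' \<union> Y) (mulf l w)" by blast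
    have x: "x = mulf l (restr X' w)" using w restr_mulf_Y[OF Y] by simp
    have "restr X' w \<in> fv.span B" using w B(3) by (auto simp: EE_def)
    then have "x \<in> mulf l ` fv.span B" using x by blast
    also have "\<dots> = fv.span (mulf l ` B)" using vp.linear_span_image[OF linear_mulf] by simp
    also have "\<dots> \<subseteq> fv.span ?W" by (intro fv.span_mono) auto
    finally show "x \<in> fv.span ?W" .
  qed
  have "EE (X' \<union> Y) (Suc u) \<subseteq> fv.span ?W"
  proof
    fix x assume "x \<in> EE (X' \<union> Y) (Suc u)"
    then obtain v where v: "v \<in> MS (Suc u)" "x = restr (X' \<union> Y) v" by (auto simp: EE_def)
    have "x \<in> restr (X' \<union> Y) ` fv.span (mulf l ` MS u \<union> T)" using v T(3) by blast
    also have "\<dots> = fv.span (restr (X' \<union> Y) ` mulf l ` MS u \<union> restr (X' \<union> Y) ` T)"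
      using vp.linear_span_image[OF linear_restr, of "X' \<union> Y" "mulf l ` MS u \<union> T"] by (simp add: image_Un)
    also have "\<dots> \<subseteq> fv.span ?W"
      using sub1 by (intro span_sub_span) (auto intro: fv.span_base)
    finally show "x \<in> fv.span ?W" .
  qed
  then have "fv.dim (EE (X' \<union> Y) (Suc u)) \<le> card ?W"
    using fv.dim_le_card fB T(1) by blast
  also have "\<dots> \<le> card (mulf l ` B) + card (restr (X' \<union> Y) ` T)" by (rule card_Un_le)
  also have "\<dots> \<le> card B + card T" using card_image_le fB T(1) by (meson add_mono)
  finally show ?thesis using B(4) T(2) by linarith
qed

lemma indep_diag:
  fixes A :: "('b \<Rightarrow> 'a::field) set" and h :: "'b \<Rightarrow> 'b \<Rightarrow> 'a"
  assumes fA: "finite A" and iA: "fv.independent A" and fY: "finite Y"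
    and A0: "\<forall>a\<in>A. \<forall>y\<in>Y. a y = 0"
    and hd: "\<forall>y\<in>Y. h y y \<noteq> 0"
    and ho: "\<forall>y\<in>Y. \<forall>y'\<in>Y. y' \<noteq> y \<longrightarrow> h y y' = 0"
  shows "fv.independent (A \<union> h ` Y) \<and> card (A \<union> h ` Y) = card A + card Y"
proof -
  have inj: "inj_on h Y"
  proof (rule inj_onI)
    fix x y assume "x \<in> Y" "y \<in> Y" "h x = h y"
    then show "x = y" using hd ho by (metis)
  qed
  have dj: "A \<inter> h ` Y = {}" using A0 hd by fastforce
  have card: "card (A \<union> h ` Y) = card A + card Y"
    using card_Un_disjoint[OF fA _ dj] fY card_image[OF inj] by simp
  have "fv.independent (A \<union> h ` Y)"
  proof (rule fv.independent_if_scalars_zero)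
    show "finite (A \<union> h ` Y)" using fA fY by simp
    fix f x assume s: "(\<Sum>x\<in>A \<union> h ` Y. fscale (f x) x) = 0" and x: "x \<in> A \<union> h ` Y"
    have split: "(\<Sum>x\<in>A \<union> h ` Y. fscale (f x) x) = (\<Sum>x\<in>A. fscale (f x) x) + (\<Sum>x\<in>h ` Y. fscale (f x) x)"
      using fA fY dj by (simp add: sum.union_disjoint)
    have hz: "f (h y) = 0" if y: "y \<in> Y" for y
    proof -
      have "0 = (\<Sum>x\<in>A \<union> h ` Y. fscale (f x) x) y" using s by simp
      also have "\<dots> = (\<Sum>x\<in>A. f x * x y) + (\<Sum>x\<in>h ` Y. f x * x y)"
        unfolding split by (simp add: sum_fun_apply)
      also have "(\<Sum>x\<in>A. f x * x y) = 0" using A0 y by (intro sum.neutral) simp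
      also have "(\<Sum>x\<in>h ` Y. f x * x y) = (\<Sum>y'\<in>Y. f (h y') * h y' y)"
        by (simp add: sum.reindex[OF inj])
      also have "\<dots> = f (h y) * h y y"
      proof -
        have ho': "\<forall>x\<in>Y - {y}. f (h x) * h x y = 0" using ho y by auto
        show ?thesis using y fY by (subst sum.remove[of Y y]) (auto intro!: sum.neutral simp: ho')
      qed
      finally show ?thesis using hd y by simp
    qed
    have "(\<Sum>x\<in>h ` Y. fscale (f x) x) = 0"
    proof (intro sum.neutral ballI)
      fix x assume "x \<in> h ` Y"
      then have "f x = 0" using hz by blast
      then show "fscale (f x) x = 0" by (simp add: fun_eq_iff)
    qed
    then have sA: "(\<Sum>x\<in>A. fscale (f x) x) = 0" using s split by simp
    show "f x = 0"
    proof (cases "x \<in> A")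
      case True
      then show ?thesis using fv.independentD[OF iA fA subset_refl sA] by simp
    next
      case False
      then show ?thesis using x hz by auto
    qed
  qed
  then show ?thesis using card by simp
qed

lemma sep_exists:
  fixes p q :: "'a::field pt"
  assumes p: "p \<noteq> (0, 0, 0)" and q: "q \<noteq> (0, 0, 0)" and np: "\<not> proportional q p"
  shows "\<exists>l. lf l q = 0 \<and> lf l p \<noteq> 0"
proof (rule ccontr)
  assume na: "\<not> ?thesis"
  obtain p0 p1 p2 where pp: "p = (p0, p1, p2)" by (cases p) auto
  obtain q0 q1 q2 where qq: "q = (q0, q1, q2)" by (cases q) auto
  have e0: "- q2 * p1 + q1 * p2 = 0" using na[unfolded not_ex, rule_format, of "(0, -q2, q1)"]
    by (auto simp: lf_def pp qq algebra_simps)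
  have e1: "q2 * p0 - q0 * p2 = 0" using na[unfolded not_ex, rule_format, of "(q2, 0, -q0)"]
    by (auto simp: lf_def pp qq algebra_simps)
  have e2: "- q1 * p0 + q0 * p1 = 0" using na[unfolded not_ex, rule_format, of "(-q1, q0, 0)"]
    by (auto simp: lf_def pp qq algebra_simps)
  have "proportional q p"
  proof (cases "q0 \<noteq> 0")
    case True
    have "p0 \<noteq> 0" using p True e1 e2 by (auto simp: pp)
    then show ?thesis unfolding proportional_def pp qq using True e1 e2
      by (intro exI[of _ "p0 / q0"]) (auto simp: field_simps)
  next
    case f0: False
    show ?thesis
    proof (cases "q1 \<noteq> 0")
      case True
      have "p1 \<noteq> 0" using p True e0 e2 f0 by (auto simp: pp)
      then show ?thesis unfolding proportional_def pp qq using True e0 e2 f0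
        by (intro exI[of _ "p1 / q1"]) (auto simp: field_simps)
    next
      case f1: False
      then have True: "q2 \<noteq> 0" using q f0 by (auto simp: qq)
      have "p2 \<noteq> 0" using p True e0 e1 f0 f1 by (auto simp: pp)
      then show ?thesis unfolding proportional_def pp qq using True e0 e1 f0 f1
        by (intro exI[of _ "p2 / q2"]) (auto simp: field_simps)
    qed
  qed
  then show False using np by simp
qed

lemma nz_exists:
  fixes p :: "'a::field pt"
  assumes p: "p \<noteq> (0, 0, 0)"
  shows "\<exists>l. lf l p \<noteq> 0"
proof -
  obtain p0 p1 p2 where pp: "p = (p0, p1, p2)" by (cases p) auto
  consider "p0 \<noteq> 0" | "p1 \<noteq> 0" | "p2 \<noteq> 0" using p pp by auto
  then show ?thesis
  proof cases
    case 1 then show ?thesis by (intro exI[of _ "(1, 0, 0)"]) (simp add: lf_def pp)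
  next
    case 2 then show ?thesis by (intro exI[of _ "(0, 1, 0)"]) (simp add: lf_def pp)
  next
    case 3 then show ?thesis by (intro exI[of _ "(0, 0, 1)"]) (simp add: lf_def pp)
  qed
qed

lemma supp_span:
  fixes Z :: "'a::field pt set"
  shows "fv.span (EE Z u) \<subseteq> {v. \<forall>p. p \<notin> Z \<longrightarrow> v p = 0}"
proof (rule fv.span_minimal)
  show "EE Z u \<subseteq> {v. \<forall>p. p \<notin> Z \<longrightarrow> v p = 0}" by (auto simp: EE_def restr_def)
  show "fv.subspace {v :: 'a pt \<Rightarrow> 'a. \<forall>p. p \<notin> Z \<longrightarrow> v p = 0}"
    by (auto simp: fv.subspace_def)
qed

lemma L1:
  fixes X' Y :: "'a::field pt set" and l :: "'a pt"
  assumes fX: "finite X'" and fY: "finite Y"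
    and Y0: "\<forall>y\<in>Y. lf l y = 0" and X0: "\<forall>p\<in>X'. lf l p \<noteq> 0"
    and Yn: "(0, 0, 0) \<notin> Y" and Yp: "\<forall>p\<in>Y. \<forall>q\<in>Y. proportional p q \<longrightarrow> p = q"
  shows "(if u = 0 then 0 else fv.dim (EE X' (u - 1))) + min (card Y) (u + 1) \<le> fv.dim (EE (X' \<union> Y) u)"
proof -
  let ?X = "X' \<union> Y"
  interpret vp: vector_space_pair "fscale :: 'a::field \<Rightarrow> ('a pt \<Rightarrow> 'a) \<Rightarrow> _" "fscale :: 'a \<Rightarrow> ('a pt \<Rightarrow> 'a) \<Rightarrow> _"
    by unfold_locales
  obtain Y' where Y': "Y' \<subseteq> Y" "card Y' = min (card Y) (u + 1)" "finite Y'"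
    using obtain_subset_with_card_n[of "min (card Y) (u + 1)" Y] by auto
  have "\<exists>A. finite A \<and> fv.independent A \<and> card A = (if u = 0 then 0 else fv.dim (EE X' (u - 1)))
     \<and> A \<subseteq> fv.span (EE ?X u) \<and> (\<forall>a\<in>A. \<forall>y\<in>Y'. a y = 0)"
  proof (cases u)
    case 0 then show ?thesis using fv.independent_empty by (intro exI[of _ "{}"]) auto
  next
    case (Suc u')
    obtain B where B: "B \<subseteq> EE X' u'" "fv.independent B" "EE X' u' \<subseteq> fv.span B" "card B = fv.dim (EE X' u')"
      using fv.basis_exists by blast
    have fB: "finite B" using B(1) finite_EE finite_subset by blast
    have inj: "inj_on (mulf l) (fv.span B)"
      unfolding vp.linear_inj_on_iff_eq_0[OF linear_mulf fv.subspace_span]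
    proof (intro ballI impI)
      fix x assume x: "x \<in> fv.span B" "mulf l x = 0"
      have "x \<in> fv.span (EE X' u')" using x(1) B(1) fv.span_mono by blast
      then have s: "\<forall>p. p \<notin> X' \<longrightarrow> x p = 0" using supp_span by blast
      show "x = 0"
      proof
        fix p show "x p = 0 p"
        proof (cases "p \<in> X'")
          case True
          have "lf l p * x p = 0" using x(2) by (metis mulf_def zero_fun_apply)
          then show ?thesis using X0 True by simp
        qed (use s in \<open>simp del: split_paired_All\<close>)
      qed
    qed
    show ?thesis
    proof (intro exI conjI)
      show "finite (mulf l ` B)" using fB by simp
      show "fv.independent (mulf l ` B)" by (rule vp.linear_independent_injective_image[OF linear_mulf B(2) inj])
      show "card (mulf l ` B) = (if u = 0 then 0 else fv.dim (EE X' (u - 1)))"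
        using card_image[OF inj_on_subset[OF inj fv.span_superset]] B(4) Suc by simp
      show "mulf l ` B \<subseteq> fv.span (EE ?X u)"
      proof
        fix x assume "x \<in> mulf l ` B"
        then obtain w where w: "w \<in> MS u'" "x = mulf l (restr X' w)" using B(1) by (auto simp: EE_def)
        have "x = restr ?X (mulf l w)" using w restr_mulf_Y[OF Y0] by simp
        moreover have "mulf l w \<in> SS u" using mult_SS[of w u' l] w Suc by (auto simp: SS_def intro: fv.span_base)
        ultimately show "x \<in> fv.span (EE ?X u)" using restr_SS by blast
      qed
      show "\<forall>a\<in>mulf l ` B. \<forall>y\<in>Y'. a y = 0" using Y0 Y'(1) by (auto simp: mulf_def)
    qed
  qed
  then obtain A where A: "finite A" "fv.independent A" "card A = (if u = 0 then 0 else fv.dim (EE X' (u - 1)))"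
     "A \<subseteq> fv.span (EE ?X u)" "\<forall>a\<in>A. \<forall>y\<in>Y'. a y = 0" by blast
  define sepf where "sepf y q = (SOME l. lf l q = 0 \<and> lf l y \<noteq> 0)" for y q :: "'a pt"
  define nzf where "nzf y = (SOME l. lf l y \<noteq> 0)" for y :: "'a pt"
  define k where "k = u + 1 - card Y'"
  define h where "h y = restr ?X (\<lambda>p. (\<Prod>q\<in>Y' - {y}. lf (sepf y q) p) * (lf (nzf y) p ^ k * 1))" for y
  have sepf: "lf (sepf y q) q = 0 \<and> lf (sepf y q) y \<noteq> 0" if "y \<in> Y'" "q \<in> Y'" "q \<noteq> y" for y q
  proof -
    have "\<not> proportional q y" using Yp that Y'(1) by blast
    moreover have "y \<noteq> (0, 0, 0)" "q \<noteq> (0, 0, 0)" using Yn that Y'(1) by auto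
    ultimately have "\<exists>l. lf l q = 0 \<and> lf l y \<noteq> 0" using sep_exists by blast
    then show ?thesis unfolding sepf_def by (rule someI_ex)
  qed
  have nzf: "lf (nzf y) y \<noteq> 0" if "y \<in> Y'" for y
  proof -
    have "y \<noteq> (0, 0, 0)" using Yn that Y'(1) by auto
    then have "\<exists>l. lf l y \<noteq> 0" by (rule nz_exists)
    then show ?thesis unfolding nzf_def by (rule someI_ex)
  qed
  have hin: "h y \<in> fv.span (EE ?X u)" if y: "y \<in> Y'" for y
  proof -
    have "Y' \<noteq> {}" using y by auto
    then have c1: "1 \<le> card Y'" using Y'(3) by (simp add: Suc_le_eq card_gt_0_iff)
    have c2: "card Y' \<le> u + 1" using Y'(2) by simp
    have cd: "card (Y' - {y}) = card Y' - 1" using y Y'(3) by simp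
    have "(\<lambda>p. lf (nzf y) p ^ k * 1) \<in> SS (0 + k)" by (rule pow_mult[OF one_SS])
    then have "(\<lambda>p. (\<Prod>q\<in>Y' - {y}. lf (sepf y q) p) * (lf (nzf y) p ^ k * 1)) \<in> SS (0 + k + card (Y' - {y}))"
      using Y'(3) by (intro prod_mult) auto
    moreover have "0 + k + card (Y' - {y}) = u" using c1 c2 cd k_def by simp
    ultimately have "(\<lambda>p. (\<Prod>q\<in>Y' - {y}. lf (sepf y q) p) * (lf (nzf y) p ^ k * 1)) \<in> SS u" by simp
    then have "h y \<in> restr ?X ` SS u" unfolding h_def by (rule imageI)
    then show ?thesis using restr_SS by blast
  qed
  have hd: "\<forall>y\<in>Y'. h y y \<noteq> 0"
  proof
    fix y assume y: "y \<in> Y'"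
    then have "y \<in> ?X" using Y'(1) by blast
    moreover have "(\<Prod>q\<in>Y' - {y}. lf (sepf y q) y) \<noteq> 0" using sepf y Y'(3) by auto
    ultimately show "h y y \<noteq> 0" using nzf[OF y] by (simp add: h_def restr_def)
  qed
  have ho: "\<forall>y\<in>Y'. \<forall>y'\<in>Y'. y' \<noteq> y \<longrightarrow> h y y' = 0"
  proof (intro ballI impI)
    fix y y' assume yy: "y \<in> Y'" "y' \<in> Y'" "y' \<noteq> y"
    have "(\<Prod>q\<in>Y' - {y}. lf (sepf y q) y') = 0"
    proof -
      have "y' \<in> Y' - {y}" using yy by blast
      moreover have "lf (sepf y y') y' = 0" using sepf[OF yy(1,2,3)] by blast
      ultimately show ?thesis using Y'(3) by (meson finite_Diff prod_zero_iff)
    qed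
    then show "h y y' = 0" by (simp add: h_def restr_def)
  qed
  from indep_diag[OF A(1,2) Y'(3) A(5) hd ho]
  have I: "fv.independent (A \<union> h ` Y')" "card (A \<union> h ` Y') = card A + card Y'" by auto
  have "A \<union> h ` Y' \<subseteq> fv.span (EE ?X u)" using A(4) hin by blast
  then have "card (A \<union> h ` Y') \<le> fv.dim (EE ?X u)"
    using fv.card_le_dim[OF finite_EE I(1)] by blast
  then show ?thesis using I(2) A(3) Y'(2) by simp
qed

lemma on_line_lf: "on_line l p \<longleftrightarrow> lf l p = 0"
  by (cases l; cases p) (simp add: on_line_def lf_def)

fun tlen :: "(nat \<Rightarrow> nat) \<Rightarrow> nat \<Rightarrow> nat" where
  "tlen d 0 = 0"
| "tlen d (Suc m) = (if 1 \<le> m \<and> d m + 1 = d (Suc m) then tlen d m + 1 else 1)"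

definition rkI :: "'a::field pt set \<Rightarrow> int \<Rightarrow> int" where
  "rkI Z v = (if v < 0 then 0 else int (fv.dim (EE Z (nat v))))"

locale kconf =
  fixes X :: "'a::field pt set" and s :: nat and d :: "nat \<Rightarrow> nat"
    and Xs :: "nat \<Rightarrow> 'a pt set" and Ls :: "nat \<Rightarrow> 'a pt set" and lv :: "nat \<Rightarrow> 'a pt"
  assumes pps: "proj_point_set X"
    and s1: "1 \<le> s" and d1: "1 \<le> d 1" and inc: "\<And>i. 1 \<le> i \<Longrightarrow> i < s \<Longrightarrow> d i < d (i + 1)"
    and XU: "X = (\<Union>i\<in>{1..s}. Xs i)"
    and lines: "\<And>i. i \<in> {1..s} \<Longrightarrow> Ls i = line_pts (lv i) \<and> lv i \<noteq> (0, 0, 0)"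
    and sub: "\<And>i. i \<in> {1..s} \<Longrightarrow> Xs i \<subseteq> X \<and> card (Xs i) = d i \<and> Xs i \<subseteq> Ls i"
    and dist: "\<And>i j. i \<in> {1..s} \<Longrightarrow> j \<in> {1..s} \<Longrightarrow> i \<noteq> j \<Longrightarrow> Ls i \<noteq> Ls j"
    and avoid: "\<And>i j. i \<in> {1..s} \<Longrightarrow> j \<in> {1..s} \<Longrightarrow> 1 < i \<Longrightarrow> j < i \<Longrightarrow> Ls i \<inter> Xs j = {}"
begin

definition Z :: "nat \<Rightarrow> 'a pt set" where "Z m = (\<Union>i\<in>{1..m}. Xs i)"

lemma finX: "finite X" using pps by (simp add: proj_point_set_def)

lemma finXs: "i \<in> {1..s} \<Longrightarrow> finite (Xs i)"
  using sub finX finite_subset by blast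

lemma Z0: "Z 0 = {}" by (simp add: Z_def)

lemma Zsuc: "Z (Suc m) = Z m \<union> Xs (Suc m)"
  by (simp add: Z_def atLeastAtMostSuc_conv Un_commute)

lemma ZsubX: "m \<le> s \<Longrightarrow> Z m \<subseteq> X"
  using XU by (auto simp: Z_def)

lemma Zs: "Z s = X" using XU by (simp add: Z_def)

lemma finZ: "m \<le> s \<Longrightarrow> finite (Z m)" using ZsubX finX finite_subset by blast

lemma d_ge: "i \<in> {1..s} \<Longrightarrow> i \<le> d i"
proof (induction i)
  case 0 then show ?case by simp
next
  case (Suc i)
  show ?case
  proof (cases "i = 0")
    case True then show ?thesis using d1 by simp
  next
    case False
    then have "d i < d (i + 1)" using inc Suc.prems by auto
    then show ?thesis using Suc False by auto
  qed
qed

lemma d_mono: "1 \<le> i \<Longrightarrow> i \<le> j \<Longrightarrow> j \<le> s \<Longrightarrow> d i + (j - i) \<le> d j"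
proof (induction j)
  case 0 then show ?case by simp
next
  case (Suc j)
  show ?case
  proof (cases "i = Suc j")
    case True then show ?thesis by simp
  next
    case False
    then have "d i + (j - i) \<le> d j" using Suc by simp
    moreover have "d j < d (j + 1)" using inc Suc.prems False by auto
    ultimately show ?thesis using Suc.prems False by (simp add: Suc_diff_le)
  qed
qed

lemma Y_on: "m \<in> {1..s} \<Longrightarrow> \<forall>y\<in>Xs m. lf (lv m) y = 0"
  using sub lines by (auto simp: line_pts_def on_line_lf)

lemma X'_off: assumes m: "m \<in> {1..s}" shows "\<forall>p\<in>Z (m - 1). lf (lv m) p \<noteq> 0"
proof
  fix p assume p: "p \<in> Z (m - 1)"
  then obtain j where j: "j \<in> {1..m - 1}" "p \<in> Xs j" by (auto simp: Z_def)
  have jm: "j < m" "1 < m" using j m by auto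
  have "Ls m \<inter> Xs j = {}" using avoid[of m j] m j jm by auto
  then have "p \<notin> line_pts (lv m)" using lines[OF m] j by auto
  moreover have "p \<noteq> (0, 0, 0)"
  proof -
    have "j \<in> {1..s}" using j m by auto
    then have "p \<in> X" using sub j by blast
    then show ?thesis using pps by (auto simp: proj_point_set_def)
  qed
  ultimately show "lf (lv m) p \<noteq> 0" by (auto simp: line_pts_def on_line_lf)
qed

lemma card_Zsuc: assumes "Suc m \<le> s" shows "card (Z (Suc m)) = card (Z m) + d (Suc m)"
proof -
  have m: "Suc m \<in> {1..s}" using assms by simp
  have "Z m \<inter> Xs (Suc m) = {}" using Y_on[OF m] X'_off[OF m] by fastforce
  then show ?thesis using Zsuc finZ[of m] finXs[OF m] sub[OF m] assms
    by (simp add: card_Un_disjoint)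
qed

lemma step_L1:
  assumes "Suc m \<le> s"
  shows "(if u = 0 then 0 else fv.dim (EE (Z m) (u - 1))) + min (d (Suc m)) (u + 1) \<le> fv.dim (EE (Z (Suc m)) u)"
proof -
  have m: "Suc m \<in> {1..s}" using assms by simp
  have "(if u = 0 then 0 else fv.dim (EE (Z m) (u - 1))) + min (card (Xs (Suc m))) (u + 1)
      \<le> fv.dim (EE (Z m \<union> Xs (Suc m)) u)"
  proof (rule L1)
    show "finite (Z m)" using finZ assms by simp
    show "finite (Xs (Suc m))" using finXs m by simp
    show "\<forall>y\<in>Xs (Suc m). lf (lv (Suc m)) y = 0" using Y_on m by simp
    show "\<forall>p\<in>Z m. lf (lv (Suc m)) p \<noteq> 0" using X'_off m by simp
    show "(0, 0, 0) \<notin> Xs (Suc m)" using pps sub m by (auto simp: proj_point_set_def)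
    have "Xs (Suc m) \<subseteq> X" using sub m by blast
    then show "\<forall>p\<in>Xs (Suc m). \<forall>q\<in>Xs (Suc m). proportional p q \<longrightarrow> p = q"
      using pps unfolding proj_point_set_def by blast
  qed
  then show ?thesis using Zsuc sub m by simp
qed

lemma step_L4:
  assumes "Suc m \<le> s"
  shows "fv.dim (EE (Z (Suc m)) (Suc u)) \<le> fv.dim (EE (Z m) u) + (Suc u + 1)"
proof -
  have m: "Suc m \<in> {1..s}" using assms by simp
  show ?thesis unfolding Zsuc
    by (rule L4) (use lines[OF m] Y_on[OF m] in auto)
qed

lemma dimE_le: "m \<le> s \<Longrightarrow> fv.dim (EE (Z m) u) \<le> card (Z m)"
  using dim_EE_le_card finZ by blast

lemma main_ind:
  "Suc m \<le> s \<Longrightarrow> (\<forall>u. d (Suc m) - 1 \<le> u \<longrightarrow> fv.dim (EE (Z (Suc m)) u) = card (Z (Suc m))) \<and>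
     rkI (Z (Suc m)) (int (d (Suc m)) - 2) = int (card (Z (Suc m))) - int (tlen d (Suc m))"
proof (induction m)
  case 0
  have c: "card (Z (Suc 0)) = d 1" using card_Zsuc[of 0] 0 Z0 by simp
  have e0: "fv.dim (EE (Z 0) u) = 0" for u using dim_EE_le_card[of "Z 0" u] Z0 by simp
  have A: "\<forall>u. d (Suc 0) - 1 \<le> u \<longrightarrow> fv.dim (EE (Z (Suc 0)) u) = card (Z (Suc 0))"
  proof (intro allI impI)
    fix u assume u: "d (Suc 0) - 1 \<le> u"
    have "d 1 \<le> fv.dim (EE (Z (Suc 0)) u)" using step_L1[of 0 u] 0 u e0 by (simp split: if_splits)
    moreover have "fv.dim (EE (Z (Suc 0)) u) \<le> card (Z (Suc 0))" using dimE_le 0 by blast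
    ultimately show "fv.dim (EE (Z (Suc 0)) u) = card (Z (Suc 0))" using c by simp
  qed
  have B: "rkI (Z (Suc 0)) (int (d (Suc 0)) - 2) = int (card (Z (Suc 0))) - int (tlen d (Suc 0))"
  proof (cases "d 1 = 1")
    case True then show ?thesis using c by (simp add: rkI_def)
  next
    case False
    then have d2: "2 \<le> d 1" using d1 by simp
    define u where "u = d 1 - 2"
    have lo: "d 1 - 1 \<le> fv.dim (EE (Z (Suc 0)) u)" using step_L1[of 0 u] 0 e0 d2 by (simp add: u_def split: if_splits)
    have hi: "fv.dim (EE (Z (Suc 0)) u) \<le> d 1 - 1"
    proof (cases u)
      case 0 then show ?thesis using dim_EE0[of "Z (Suc 0)"] d2 by simp
    next
      case (Suc u')
      then show ?thesis using step_L4[of 0 u'] 0 e0 u_def by simp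
    qed
    have "nat (int (d (Suc 0)) - 2) = u" using u_def d2 by simp
    then show ?thesis using lo hi c d2 by (simp add: rkI_def)
  qed
  show ?case using A B by blast
next
  case (Suc m)
  let ?m = "Suc m" and ?M = "Suc (Suc m)"
  have IH: "(\<forall>u. d ?m - 1 \<le> u \<longrightarrow> fv.dim (EE (Z ?m) u) = card (Z ?m)) \<and>
     rkI (Z ?m) (int (d ?m) - 2) = int (card (Z ?m)) - int (tlen d ?m)" using Suc.IH Suc.prems Suc_leD by blast
  have lt: "d ?m < d ?M" using inc[of ?m] Suc.prems by simp
  have dm1: "1 \<le> d ?m" using d_ge[of ?m] Suc.prems by simp
  have c: "card (Z ?M) = card (Z ?m) + d ?M" using card_Zsuc Suc.prems by blast
  have A: "\<forall>u. d ?M - 1 \<le> u \<longrightarrow> fv.dim (EE (Z ?M) u) = card (Z ?M)"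
  proof (intro allI impI)
    fix u assume u: "d ?M - 1 \<le> u"
    have u1: "u \<noteq> 0" using u lt dm1 by simp
    have "fv.dim (EE (Z ?m) (u - 1)) = card (Z ?m)" using IH u lt by simp
    then have "card (Z ?m) + d ?M \<le> fv.dim (EE (Z ?M) u)" using step_L1[of ?m u] Suc.prems u u1 by simp
    moreover have "fv.dim (EE (Z ?M) u) \<le> card (Z ?M)" using dimE_le Suc.prems by blast
    ultimately show "fv.dim (EE (Z ?M) u) = card (Z ?M)" using c by simp
  qed
  have d2: "2 \<le> d ?M" using lt dm1 by simp
  define u where "u = d ?M - 2"
  define P where "P = (if u = 0 then 0 else fv.dim (EE (Z ?m) (u - 1)))"
  have lo: "P + (d ?M - 1) \<le> fv.dim (EE (Z ?M) u)"
    using step_L1[of ?m u] Suc.prems d2 by (simp add: u_def P_def)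
  have hi: "fv.dim (EE (Z ?M) u) \<le> P + (d ?M - 1)"
  proof (cases u)
    case 0 then show ?thesis using dim_EE0[of "Z ?M"] d2 u_def by simp
  next
    case (Suc u')
    then show ?thesis using step_L4[of ?m u'] Suc.prems u_def P_def by simp
  qed
  have eq: "rkI (Z ?M) (int (d ?M) - 2) = int P + int (d ?M) - 1"
  proof -
    have "nat (int (d ?M) - 2) = u" using u_def d2 by simp
    then show ?thesis using lo hi d2 by (simp add: rkI_def)
  qed
  have B: "rkI (Z ?M) (int (d ?M) - 2) = int (card (Z ?M)) - int (tlen d ?M)"
  proof (cases "d ?m + 1 = d ?M")
    case True
    have tl: "tlen d ?M = tlen d ?m + 1" using True by simp
    have "int P = rkI (Z ?m) (int (d ?m) - 2)"
    proof (cases "d ?m = 1")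
      case True2: True
      then show ?thesis using True by (simp add: P_def rkI_def u_def)
    next
      case False2: False
      have "u - 1 = d ?m - 2" "u \<noteq> 0" using True False2 dm1 u_def by auto
      moreover have "nat (int (d ?m) - 2) = d ?m - 2" using False2 dm1 by simp
      ultimately show ?thesis using False2 dm1 by (simp add: P_def rkI_def)
    qed
    then show ?thesis using eq IH c tl by simp
  next
    case False
    have tl: "tlen d ?M = 1" using False by simp
    have u1: "u \<noteq> 0" using False lt u_def dm1 by simp
    have "P = card (Z ?m)" using IH u1 False lt by (simp add: P_def u_def)
    then show ?thesis using eq c tl d2 by simp
  qed
  show ?case using A B by blast
qed

end

definition cross :: "'a::field pt \<Rightarrow> 'a pt \<Rightarrow> 'a pt" where
  "cross v w = (case v of (a0, a1, a2) \<Rightarrow> case w of (b0, b1, b2) \<Rightarrow>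
     (a1 * b2 - a2 * b1, a2 * b0 - a0 * b2, a0 * b1 - a1 * b0))"

definition smul :: "'a::field \<Rightarrow> 'a pt \<Rightarrow> 'a pt" where
  "smul c w = (case w of (b0, b1, b2) \<Rightarrow> (c * b0, c * b1, c * b2))"

lemma par:
  fixes v w :: "'a::field pt"
  assumes w: "w \<noteq> (0, 0, 0)" and c: "cross v w = (0, 0, 0)"
  shows "\<exists>c. v = smul c w"
proof -
  obtain a0 a1 a2 where v: "v = (a0, a1, a2)" by (cases v) auto
  obtain b0 b1 b2 where ww: "w = (b0, b1, b2)" by (cases w) auto
  have e: "a1 * b2 = a2 * b1" "a2 * b0 = a0 * b2" "a0 * b1 = a1 * b0"
    using c by (auto simp: cross_def v ww)
  consider "b0 \<noteq> 0" | "b1 \<noteq> 0" | "b2 \<noteq> 0" using w ww by auto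
  then show ?thesis
  proof cases
    case 1 then show ?thesis using e
      by (intro exI[of _ "a0 / b0"]) (auto simp: smul_def v ww field_simps)
  next
    case 2 then show ?thesis using e
      by (intro exI[of _ "a1 / b1"]) (auto simp: smul_def v ww field_simps)
  next
    case 3 then show ?thesis using e
      by (intro exI[of _ "a2 / b2"]) (auto simp: smul_def v ww field_simps)
  qed
qed

lemma lf_cross:
  fixes l p q :: "'a::field pt"
  assumes "lf l p = 0" "lf l q = 0"
  shows "cross l (cross p q) = (0, 0, 0)"
proof -
  obtain a0 a1 a2 where l: "l = (a0, a1, a2)" by (cases l) auto
  obtain b0 b1 b2 where p: "p = (b0, b1, b2)" by (cases p) auto
  obtain c0 c1 c2 where q: "q = (c0, c1, c2)" by (cases q) auto
  have h1: "a0 * b0 + a1 * b1 + a2 * b2 = 0" and h2: "a0 * c0 + a1 * c1 + a2 * c2 = 0"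
    using assms by (auto simp: lf_def l p q)
  have "cross l (cross p q) = (b0 * (a0 * c0 + a1 * c1 + a2 * c2) - c0 * (a0 * b0 + a1 * b1 + a2 * b2),
      b1 * (a0 * c0 + a1 * c1 + a2 * c2) - c1 * (a0 * b0 + a1 * b1 + a2 * b2),
      b2 * (a0 * c0 + a1 * c1 + a2 * c2) - c2 * (a0 * b0 + a1 * b1 + a2 * b2))"
    by (simp add: cross_def l p q algebra_simps)
  then show ?thesis using h1 h2 by simp
qed

lemma cross_nz:
  fixes p q :: "'a::field pt"
  assumes p: "p \<noteq> (0, 0, 0)" and q: "q \<noteq> (0, 0, 0)" and np: "\<not> proportional q p"
  shows "cross p q \<noteq> (0, 0, 0)"
proof
  assume "cross p q = (0, 0, 0)"
  then obtain c where c: "p = smul c q" using par q by blast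
  have "c \<noteq> 0" using p c by (cases q) (auto simp: smul_def)
  then have "proportional q p" using c by (cases q) (auto simp: proportional_def smul_def)
  then show False using np by simp
qed

lemma lf_smul: "lf (smul c w) r = c * lf w r"
  by (cases w; cases r) (simp add: lf_def smul_def algebra_simps)

lemma two_points_line:
  fixes l l' p q :: "'a::field pt"
  assumes l: "l \<noteq> (0, 0, 0)" and l': "l' \<noteq> (0, 0, 0)"
    and p: "p \<noteq> (0, 0, 0)" and q: "q \<noteq> (0, 0, 0)" and np: "\<not> proportional q p"
    and h: "lf l p = 0" "lf l q = 0" "lf l' p = 0" "lf l' q = 0"
  shows "line_pts l = line_pts l'"
proof -
  let ?w = "cross p q"
  have w: "?w \<noteq> (0, 0, 0)" using cross_nz[OF p q np] .
  obtain c where c: "l = smul c ?w" using par[OF w lf_cross[OF h(1,2)]] by blast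
  obtain c' where c': "l' = smul c' ?w" using par[OF w lf_cross[OF h(3,4)]] by blast
  have "c \<noteq> 0" using l c by (cases ?w) (auto simp: smul_def)
  moreover have "c' \<noteq> 0" using l' c' by (cases ?w) (auto simp: smul_def)
  ultimately show ?thesis
    by (auto simp: line_pts_def on_line_lf c c' lf_smul)
qed

lemma line_meet:
  fixes X L L' :: "'a::field pt set"
  assumes X: "proj_point_set X" and L: "is_line L" and L': "is_line L'" and ne: "L \<noteq> L'"
  shows "card (X \<inter> L \<inter> L') \<le> 1"
proof -
  have fin: "finite (X \<inter> L \<inter> L')" using X by (simp add: proj_point_set_def)
  obtain l where l: "l \<noteq> (0, 0, 0)" "L = line_pts l" using L by (auto simp: is_line_def)
  obtain l' where l': "l' \<noteq> (0, 0, 0)" "L' = line_pts l'" using L' by (auto simp: is_line_def)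
  have "\<forall>p\<in>X \<inter> L \<inter> L'. \<forall>q\<in>X \<inter> L \<inter> L'. p = q"
  proof (intro ballI, rule ccontr)
    fix p q assume pq: "p \<in> X \<inter> L \<inter> L'" "q \<in> X \<inter> L \<inter> L'" "p \<noteq> q"
    have "\<not> proportional q p" using X pq by (auto simp: proj_point_set_def)
    moreover have "p \<noteq> (0, 0, 0)" "q \<noteq> (0, 0, 0)" using pq l l' by (auto simp: line_pts_def)
    moreover have "lf l p = 0" "lf l q = 0" "lf l' p = 0" "lf l' q = 0"
      using pq l l' by (auto simp: line_pts_def on_line_lf)
    ultimately have "L = L'" using two_points_line[OF l(1) l'(1)] l l' by metis
    then show False using ne by simp
  qed
  then show ?thesis using fin by (simp add: card_le_Suc0_iff_eq)
qed

lemma quad_ineq: "4 * r - 6 \<le> r * r - (r::int)"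
proof -
  have "0 \<le> (r - 2) * (r - 3)"
  proof (cases "r \<le> 2")
    case True then show ?thesis by (intro mult_nonpos_nonpos) auto
  next
    case False then show ?thesis by (intro mult_nonneg_nonneg) auto
  qed
  then show ?thesis by (simp add: algebra_simps)
qed

lemma counting:
  fixes X :: "'b set" and G :: "'b set set"
  assumes fX: "finite X" and fG: "finite G"
    and cL: "\<forall>L\<in>G. card (X \<inter> L) = s"
    and cLL: "\<forall>L\<in>G. \<forall>L'\<in>G. L \<noteq> L' \<longrightarrow> card (X \<inter> L \<inter> L') \<le> 1"
  shows "4 * int (card G) * int s - 6 * int (card X) \<le> int (card G) * (int (card G) - 1)"
proof -
  define chi :: "'b set \<Rightarrow> 'b \<Rightarrow> int" where "chi L p = (if p \<in> L then 1 else 0)" for L p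
  define r where "r p = (\<Sum>L\<in>G. chi L p)" for p
  let ?m = "int (card G)"
  have c1: "int (card (X \<inter> L)) = (\<Sum>p\<in>X. chi L p)" for L
    using sum.inter_restrict[OF fX, of "\<lambda>_. 1::int" L] by (simp add: chi_def)
  have c2: "int (card (X \<inter> L \<inter> L')) = (\<Sum>p\<in>X. chi L p * chi L' p)" for L L'
  proof -
    have "int (card (X \<inter> (L \<inter> L'))) = (\<Sum>p\<in>X. if p \<in> L \<inter> L' then 1 else 0)"
      using sum.inter_restrict[OF fX, of "\<lambda>_. 1::int" "L \<inter> L'"] by simp
    moreover have "(\<Sum>p\<in>X. chi L p * chi L' p) = (\<Sum>p\<in>X. if p \<in> L \<inter> L' then 1 else 0)"
      by (intro sum.cong) (auto simp: chi_def)
    ultimately show ?thesis by (simp add: Int_assoc)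
  qed
  have S1: "(\<Sum>p\<in>X. r p) = ?m * int s"
  proof -
    have "(\<Sum>p\<in>X. r p) = (\<Sum>L\<in>G. \<Sum>p\<in>X. chi L p)" unfolding r_def by (rule sum.swap)
    also have "\<dots> = (\<Sum>L\<in>G. int s)" using cL c1 by (intro sum.cong) auto
    finally show ?thesis by simp
  qed
  have S2: "(\<Sum>p\<in>X. r p * r p) \<le> ?m * (int s + ?m - 1)"
  proof -
    have "(\<Sum>p\<in>X. r p * r p) = (\<Sum>p\<in>X. \<Sum>L\<in>G. \<Sum>L'\<in>G. chi L p * chi L' p)"
      unfolding r_def by (simp add: sum_product)
    also have "\<dots> = (\<Sum>L\<in>G. \<Sum>p\<in>X. \<Sum>L'\<in>G. chi L p * chi L' p)" by (rule sum.swap)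
    also have "\<dots> = (\<Sum>L\<in>G. \<Sum>L'\<in>G. \<Sum>p\<in>X. chi L p * chi L' p)" by (intro sum.cong refl sum.swap)
    also have "\<dots> = (\<Sum>L\<in>G. \<Sum>L'\<in>G. int (card (X \<inter> L \<inter> L')))" by (simp add: c2)
    also have "\<dots> \<le> (\<Sum>L\<in>G. int s + ?m - 1)"
    proof (rule sum_mono)
      fix L assume L: "L \<in> G"
      have "(\<Sum>L'\<in>G. int (card (X \<inter> L \<inter> L'))) = int (card (X \<inter> L \<inter> L)) + (\<Sum>L'\<in>G - {L}. int (card (X \<inter> L \<inter> L')))"
        using L fG by (simp add: sum.remove)
      also have "int (card (X \<inter> L \<inter> L)) = int s" using cL L by simp
      also have "(\<Sum>L'\<in>G - {L}. int (card (X \<inter> L \<inter> L'))) \<le> (\<Sum>L'\<in>G - {L}. 1)"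
        using cLL L by (intro sum_mono) auto
      also have "(\<Sum>L'\<in>G - {L}. (1::int)) = ?m - 1" 
      proof -
        have "card G \<ge> 1" using L fG by (metis One_nat_def Suc_leI card_gt_0_iff empty_iff)
        then show ?thesis using L fG by (simp add: card_Diff_singleton of_nat_diff)
      qed
      finally show "(\<Sum>L'\<in>G. int (card (X \<inter> L \<inter> L'))) \<le> int s + ?m - 1" by simp
    qed
    also have "\<dots> = ?m * (int s + ?m - 1)" by simp
    finally show ?thesis .
  qed
  have "(\<Sum>p\<in>X. 4 * r p - 6) \<le> (\<Sum>p\<in>X. r p * r p - r p)"
    by (intro sum_mono quad_ineq)
  then have "4 * (\<Sum>p\<in>X. r p) - 6 * int (card X) \<le> (\<Sum>p\<in>X. r p * r p) - (\<Sum>p\<in>X. r p)"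
    by (simp add: sum_subtractf sum_distrib_left)
  then show ?thesis using S1 S2 by (simp add: algebra_simps)
qed

lemma infinite_alg_closed: "infinite (UNIV :: 'a::alg_closed_field set)"
proof
  assume fin: "finite (UNIV :: 'a set)"
  define q :: "'a poly" where "q = (\<Prod>a\<in>UNIV. [:-a, 1:])"
  have dq: "degree q = card (UNIV :: 'a set)"
    unfolding q_def by (subst degree_prod_sum_eq) auto
  have "card (UNIV :: 'a set) > 0" using fin by (simp add: card_gt_0_iff)
  then have "degree (q + 1) > 0" using dq by (simp add: degree_add_eq_left)
  then obtain x where "poly (q + 1) x = 0" using alg_closed_imp_poly_has_root by blast
  moreover have "poly q x = 0"
    unfolding q_def poly_prod using fin by (intro prod_zero bexI[of _ x]) auto
  ultimately show False by simp
qed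

lemma infinite_lines_through:
  fixes p :: "'a::alg_closed_field pt"
  assumes p: "p \<noteq> (0, 0, 0)"
  shows "infinite {L. is_line L \<and> p \<in> L}"
proof -
  obtain p0 p1 p2 where pp: "p = (p0, p1, p2)" by (cases p) auto
  have gen: "infinite {L. is_line L \<and> p \<in> L}"
    if n: "\<And>c. n c \<noteq> (0, 0, 0) \<and> lf (n c) p = 0"
     and r: "\<And>c c'. rp c \<noteq> (0, 0, 0) \<and> lf (n c') (rp c) = c' - c"
    for n :: "'a \<Rightarrow> 'a pt" and rp
  proof
    assume fin: "finite {L. is_line L \<and> p \<in> L}"
    have "inj (\<lambda>c. line_pts (n c))"
    proof (rule injI)
      fix c c' assume e: "line_pts (n c) = line_pts (n c')"
      have "rp c \<in> line_pts (n c)" using r[of c c] by (simp add: line_pts_def on_line_lf)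
      then have "rp c \<in> line_pts (n c')" using e by simp
      then have "c' - c = 0" using r[of c c'] by (simp add: line_pts_def on_line_lf)
      then show "c = c'" by simp
    qed
    moreover have "range (\<lambda>c. line_pts (n c)) \<subseteq> {L. is_line L \<and> p \<in> L}"
    proof
      fix L assume "L \<in> range (\<lambda>c. line_pts (n c))"
      then obtain c where c: "L = line_pts (n c)" by blast
      have "is_line L" unfolding is_line_def using n[of c] c by blast
      moreover have "p \<in> L" using n[of c] p c by (simp add: line_pts_def on_line_lf)
      ultimately show "L \<in> {L. is_line L \<and> p \<in> L}" by simp
    qed
    ultimately have "finite (UNIV :: 'a set)"
      using fin by (meson finite_imageD finite_subset)
    then show False using infinite_alg_closed by blast
  qed
  consider "p0 \<noteq> 0" | "p1 \<noteq> 0" | "p2 \<noteq> 0" using p pp by auto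
  then show ?thesis
  proof cases
    case 1
    show ?thesis
      by (rule gen[of "\<lambda>c. (-(p1 + c * p2) / p0, 1, c)" "\<lambda>c. (0, -c, 1)"])
         (use 1 in \<open>auto simp: lf_def pp field_simps\<close>)
  next
    case 2
    show ?thesis
      by (rule gen[of "\<lambda>c. (1, -(p0 + c * p2) / p1, c)" "\<lambda>c. (-c, 0, 1)"])
         (use 2 in \<open>auto simp: lf_def pp field_simps\<close>)
  next
    case 3
    show ?thesis
      by (rule gen[of "\<lambda>c. (1, c, -(p0 + c * p1) / p2)" "\<lambda>c. (-c, 1, 0)"])
         (use 3 in \<open>auto simp: lf_def pp field_simps\<close>)
  qed
qed

context kconf begin

lemma dhilb_res: "dhilb X (d s - 1) = int (tlen d s)"
proof -
  have ss: "Suc (s - 1) = s" using s1 by simp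
  have MI: "(\<forall>u. d s - 1 \<le> u \<longrightarrow> fv.dim (EE X u) = card X) \<and>
     rkI X (int (d s) - 2) = int (card X) - int (tlen d s)"
    using main_ind[of "s - 1"] ss s1 Zs by simp
  have "fv.dim (EE X (d s - 1)) = card X" using MI by blast
  then have h1: "hilb X (d s - 1) = int (card X)" using hilb_eq[of X "d s - 1"] by simp
  have dsp: "1 \<le> d s" using d_ge[of s] s1 by simp
  show ?thesis
  proof (cases "d s - 1 = 0")
    case True
    then have "d s = 1" using dsp by simp
    then have "int (card X) = int (tlen d s)" using MI by (simp add: rkI_def)
    then show ?thesis using True h1 by (simp add: dhilb_def)
  next
    case False
    have "nat (int (d s) - 2) = d s - 1 - 1" using False by simp
    then have r: "int (fv.dim (EE X (d s - 1 - 1))) = int (card X) - int (tlen d s)"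
      using MI False by (simp add: rkI_def)
    have "hilb X (d s - 1 - 1) = int (fv.dim (EE X (d s - 1 - 1)))" by (rule hilb_eq)
    then have "hilb X (d s - 1 - 1) = int (card X) - int (tlen d s)" using r by simp
    then show ?thesis using False h1 by (simp add: dhilb_def)
  qed
qed

lemma tail_char:
  "Suc m \<le> s \<Longrightarrow> \<forall>t. (t \<le> Suc m \<and> (\<forall>k<t. d (Suc m - k) = d (Suc m) - k)) \<longleftrightarrow> t \<le> tlen d (Suc m)"
proof (induction m)
  case 0
  show ?case
  proof
    fix t show "(t \<le> Suc 0 \<and> (\<forall>k<t. d (Suc 0 - k) = d (Suc 0) - k)) \<longleftrightarrow> t \<le> tlen d (Suc 0)"
    proof
      assume "t \<le> tlen d (Suc 0)"
      then have t1: "t \<le> Suc 0" by simp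
      have "d (Suc 0 - k) = d (Suc 0) - k" if "k < t" for k
      proof -
        have "k = 0" using that t1 by simp
        then show ?thesis by simp
      qed
      then show "t \<le> Suc 0 \<and> (\<forall>k<t. d (Suc 0 - k) = d (Suc 0) - k)" using t1 by blast
    qed simp
  qed
next
  case (Suc m)
  let ?m = "Suc m" and ?M = "Suc (Suc m)"
  have IH: "\<forall>t. (t \<le> ?m \<and> (\<forall>k<t. d (?m - k) = d ?m - k)) \<longleftrightarrow> t \<le> tlen d ?m"
    using Suc.IH Suc.prems by simp
  have lt: "d ?m < d ?M" using inc[of ?m] Suc.prems by simp
  show ?case
  proof
    fix t
    show "(t \<le> ?M \<and> (\<forall>k<t. d (?M - k) = d ?M - k)) \<longleftrightarrow> t \<le> tlen d ?M"
    proof (cases "d ?m + 1 = d ?M")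
      case True
      have tl: "tlen d ?M = tlen d ?m + 1" using True by simp
      show ?thesis
      proof (cases t)
        case 0 then show ?thesis by simp
      next
        case (Suc t')
        have "(\<forall>k<Suc t'. d (?M - k) = d ?M - k) \<longleftrightarrow> (\<forall>k<t'. d (?m - k) = d ?m - k)"
        proof
          assume a: "\<forall>k<Suc t'. d (?M - k) = d ?M - k"
          show "\<forall>k<t'. d (?m - k) = d ?m - k"
          proof (intro allI impI)
            fix k assume kt: "k < t'"
            have "d (?M - Suc k) = d ?M - Suc k" using a kt by blast
            then show "d (?m - k) = d ?m - k" using True by simp
          qed
        next
          assume a: "\<forall>k<t'. d (?m - k) = d ?m - k"
          show "\<forall>k<Suc t'. d (?M - k) = d ?M - k"
          proof (intro allI impI)
            fix k assume k: "k < Suc t'"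
            show "d (?M - k) = d ?M - k"
            proof (cases k)
              case 0 then show ?thesis by simp
            next
              case (Suc k')
              then have "d (?m - k') = d ?m - k'" using a k by simp
              then show ?thesis using True Suc by simp
            qed
          qed
        qed
        then show ?thesis using IH[rule_format, of t'] Suc tl by auto
      qed
    next
      case False
      have tl: "tlen d ?M = 1" using False by simp
      show ?thesis
      proof
        assume a: "t \<le> ?M \<and> (\<forall>k<t. d (?M - k) = d ?M - k)"
        show "t \<le> tlen d ?M"
        proof (rule ccontr)
          assume "\<not> t \<le> tlen d ?M"
          then have "1 < t" using tl by simp
          then have "d (?M - 1) = d ?M - 1" using a by blast
          then show False using False lt by simp
        qed
      next
        assume "t \<le> tlen d ?M"
        then have t1: "t \<le> 1" using tl by simp
        have "d (?M - k) = d ?M - k" if "k < t" for k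
        proof -
          have "k = 0" using that t1 by simp
          then show ?thesis by simp
        qed
        then show "t \<le> ?M \<and> (\<forall>k<t. d (?M - k) = d ?M - k)" using t1 by auto
      qed
    qed
  qed
qed

lemma tail_char_s: "(t \<le> s \<and> (\<forall>k<t. d (s - k) = d s - k)) \<longleftrightarrow> t \<le> tlen d s"
  using tail_char[of "s - 1"] s1 by simp

lemma consec: "consec_tail s d = tlen d s"
  unfolding consec_tail_def
  by (rule Greatest_equality) (use tail_char_s in auto)

lemma tlen_le: "tlen d s \<le> s" using tail_char_s[of "tlen d s"] by simp

lemma isLs: "i \<in> {1..s} \<Longrightarrow> is_line (Ls i)"
  using lines unfolding is_line_def by blast

lemma card_on_Ls: assumes i: "i \<in> {1..s}" shows "card (X \<inter> Ls i) \<le> d i + (s - i)"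
proof -
  have "X \<inter> Ls i \<subseteq> Xs i \<union> (\<Union>j\<in>{i+1..s}. X \<inter> Ls i \<inter> Ls j)"
  proof
    fix p assume p: "p \<in> X \<inter> Ls i"
    then obtain j where j: "j \<in> {1..s}" "p \<in> Xs j" using XU by auto
    consider "j < i" | "j = i" | "i < j" by linarith
    then show "p \<in> Xs i \<union> (\<Union>j\<in>{i+1..s}. X \<inter> Ls i \<inter> Ls j)"
    proof cases
      case 1
      then have "Ls i \<inter> Xs j = {}" using avoid[of i j] i j by auto
      then show ?thesis using p j by auto
    next
      case 2 then show ?thesis using j by simp
    next
      case 3 then show ?thesis using p j sub[of j] by auto
    qed
  qed
  then have "card (X \<inter> Ls i) \<le> card (Xs i \<union> (\<Union>j\<in>{i+1..s}. X \<inter> Ls i \<inter> Ls j))"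
    using finXs[OF i] finX by (intro card_mono) auto
  also have "\<dots> \<le> card (Xs i) + card (\<Union>j\<in>{i+1..s}. X \<inter> Ls i \<inter> Ls j)" by (rule card_Un_le)
  also have "card (\<Union>j\<in>{i+1..s}. X \<inter> Ls i \<inter> Ls j) \<le> (\<Sum>j\<in>{i+1..s}. card (X \<inter> Ls i \<inter> Ls j))"
    by (rule card_UN_le) simp
  also have "\<dots> \<le> (\<Sum>j\<in>{i+1..s}. 1)"
  proof (rule sum_mono)
    fix j assume j: "j \<in> {i+1..s}"
    show "card (X \<inter> Ls i \<inter> Ls j) \<le> 1"
      using line_meet[OF pps isLs[OF i] isLs] dist[of i j] i j by auto
  qed
  finally show ?thesis using sub[OF i] by simp
qed

lemma card_off: assumes L: "is_line L" and n: "\<forall>i\<in>{1..s}. L \<noteq> Ls i" shows "card (X \<inter> L) \<le> s"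
proof -
  have "X \<inter> L \<subseteq> (\<Union>i\<in>{1..s}. X \<inter> Ls i \<inter> L)" using XU sub by fastforce
  then have "card (X \<inter> L) \<le> card (\<Union>i\<in>{1..s}. X \<inter> Ls i \<inter> L)"
    using finX by (intro card_mono) auto
  also have "\<dots> \<le> (\<Sum>i\<in>{1..s}. card (X \<inter> Ls i \<inter> L))" by (rule card_UN_le) simp
  also have "\<dots> \<le> (\<Sum>i\<in>{1..s}. 1)"
  proof (rule sum_mono)
    fix i assume i: "i \<in> {1..s}"
    have "Ls i \<noteq> L" using n i by auto
    then show "card (X \<inter> Ls i \<inter> L) \<le> 1"
      using line_meet[OF pps isLs[OF i] L] by blast
  qed
  finally show ?thesis by simp
qed

lemma tail_index:
  assumes i: "i \<in> {1..s}" and h: "d s \<le> d i + (s - i)"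
  shows "s + 1 - tlen d s \<le> i"
proof -
  have "s - i + 1 \<le> s \<and> (\<forall>k<s - i + 1. d (s - k) = d s - k)"
  proof (intro conjI allI impI)
    show "s - i + 1 \<le> s" using i by auto
    fix k assume k: "k < s - i + 1"
    define j where "j = s - k"
    have ij: "i \<le> j" "j \<le> s" using k i by (auto simp: j_def)
    have a: "d i + (j - i) \<le> d j" using d_mono[of i j] ij i by auto
    have b: "d j + (s - j) \<le> d s" using d_mono[of j s] ij i by auto
    have kj: "k = s - j" "d (s - k) = d j" using k i by (auto simp: j_def)
    have "j - i + (s - j) = s - i" using ij by arith
    then have "d j + (s - j) = d s" using a b h by linarith
    then show "d (s - k) = d s - k" using kj by arith
  qed
  then have "s - i + 1 \<le> tlen d s" using tail_char_s by blast
  then show ?thesis by simp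
qed

lemma card_Z_tri: "m \<le> s \<Longrightarrow> (\<forall>i\<in>{1..s}. d i = i) \<Longrightarrow> 2 * card (Z m) = m * (m + 1)"
proof (induction m)
  case 0 then show ?case by (simp add: Z0)
next
  case (Suc m)
  then have "card (Z (Suc m)) = card (Z m) + Suc m" using card_Zsuc by simp
  then show ?case using Suc by simp
qed

lemma lines_bound:
  assumes ns: "\<not> (s = 1 \<and> d 1 = 1)"
  shows "card {L. is_line L \<and> card (X \<inter> L) = d s} \<le> tlen d s + 1"
proof (cases "s < d s")
  case True
  let ?F = "{L. is_line L \<and> card (X \<inter> L) = d s}"
  have "?F \<subseteq> Ls ` {s + 1 - tlen d s..s}"
  proof
    fix L assume L: "L \<in> ?F"
    show "L \<in> Ls ` {s + 1 - tlen d s..s}"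
    proof (cases "\<exists>i\<in>{1..s}. L = Ls i")
      case True
      then obtain i where i: "i \<in> {1..s}" "L = Ls i" by blast
      have "d s \<le> d i + (s - i)" using card_on_Ls[OF i(1)] L i by simp
      then have "s + 1 - tlen d s \<le> i" using tail_index i by blast
      then show ?thesis using i by auto
    next
      case False
      then have "card (X \<inter> L) \<le> s" using card_off L by blast
      then show ?thesis using L \<open>s < d s\<close> by simp
    qed
  qed
  then have "card ?F \<le> card (Ls ` {s + 1 - tlen d s..s})" by (intro card_mono) auto
  also have "\<dots> \<le> card {s + 1 - tlen d s..s}" by (rule card_image_le) simp
  also have "\<dots> = tlen d s" using tlen_le by simp
  finally show ?thesis by simp
next
  case False
  let ?F = "{L. is_line L \<and> card (X \<inter> L) = d s}"
  have dss: "d s = s" using False d_ge[of s] s1 by simp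
  have di: "\<forall>i\<in>{1..s}. d i = i"
  proof
    fix i assume i: "i \<in> {1..s}"
    have "d i + (s - i) \<le> d s" using d_mono[of i s] i by auto
    then show "d i = i" using d_ge[OF i] dss i by auto
  qed
  have s2: "2 \<le> s" using ns di s1 by (cases "s = 1") auto
  have tl: "tlen d s = s" using tail_char_s[of s] tlen_le dss di by auto
  have cX: "2 * card X = s * (s + 1)" using card_Z_tri[of s] di Zs by simp
  show ?thesis
  proof (rule ccontr)
    assume "\<not> card ?F \<le> tlen d s + 1"
    then have big: "s + 2 \<le> card ?F" using tl by simp
    then have "finite ?F" by (intro card_ge_0_finite) simp
    then obtain G where G: "G \<subseteq> ?F" "card G = s + 2" "finite G"
      using obtain_subset_with_card_n[OF big] by blast
    have "4 * int (card G) * int s - 6 * int (card X) \<le> int (card G) * (int (card G) - 1)"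
    proof (rule counting)
      show "finite X" by (rule finX)
      show "finite G" by (rule G(3))
      show "\<forall>L\<in>G. card (X \<inter> L) = s" using G(1) dss by auto
      show "\<forall>L\<in>G. \<forall>L'\<in>G. L \<noteq> L' \<longrightarrow> card (X \<inter> L \<inter> L') \<le> 1"
        using G(1) line_meet[OF pps] by auto
    qed
    moreover have "6 * int (card X) = 3 * (int s * int s) + 3 * int s"
    proof -
      have "int (2 * card X) = int (s * (s + 1))" using cX by simp
      then show ?thesis by (simp add: algebra_simps)
    qed
    moreover have "4 * int (card G) * int s = 4 * (int s * int s) + 8 * int s" using G(2) by (simp add: algebra_simps)
    moreover have "int (card G) * (int (card G) - 1) = int s * int s + 3 * int s + 2" using G(2) by (simp add: algebra_simps)
    ultimately have "int s \<le> 1" by linarith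
    then show False using s2 by simp
  qed
qed

end

theorem mainTheorem8:
  fixes X :: "'a::alg_closed_field pt set" and s :: nat and d :: "nat \<Rightarrow> nat"
  assumes "k_configuration X s d"
  shows "dhilb X (d s - 1) = int (consec_tail s d) \<and>
         card {L. is_line L \<and> card (X \<inter> L) = d s} \<le> dhilb X (d s - 1) + 1"
proof -
  obtain Xs Ls where
    pps: "proj_point_set X" and s1: "1 \<le> s" and d1: "1 \<le> d 1"
    and inc: "\<forall>i. 1 \<le> i \<and> i < s \<longrightarrow> d i < d (i + 1)"
    and XU: "X = (\<Union>i\<in>{1..s}. Xs i)"
    and P: "\<forall>i\<in>{1..s}. is_line (Ls i) \<and> Xs i \<subseteq> X \<and> card (Xs i) = d i \<and> Xs i \<subseteq> Ls i"
    and D: "\<forall>i\<in>{1..s}. \<forall>j\<in>{1..s}. i \<noteq> j \<longrightarrow> Ls i \<noteq> Ls j"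
    and A: "\<forall>i\<in>{1..s}. \<forall>j\<in>{1..s}. 1 < i \<and> j < i \<longrightarrow> Ls i \<inter> Xs j = {}"
    using assms unfolding k_configuration_def by blast
  define lv where "lv i = (SOME l. l \<noteq> (0, 0, 0) \<and> Ls i = line_pts l)" for i
  have lv: "Ls i = line_pts (lv i) \<and> lv i \<noteq> (0, 0, 0)" if "i \<in> {1..s}" for i
  proof -
    have "\<exists>l. l \<noteq> (0, 0, 0) \<and> Ls i = line_pts l" using P that by (simp add: is_line_def)
    then have "lv i \<noteq> (0, 0, 0) \<and> Ls i = line_pts (lv i)" unfolding lv_def by (rule someI_ex)
    then show ?thesis by simp
  qed
  interpret kconf X s d Xs Ls lv
  proof
    show "proj_point_set X" "1 \<le> s" "1 \<le> d 1" by fact+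
    show "\<And>i. 1 \<le> i \<Longrightarrow> i < s \<Longrightarrow> d i < d (i + 1)" using inc by blast
    show "X = (\<Union>i\<in>{1..s}. Xs i)" by fact
    show "\<And>i. i \<in> {1..s} \<Longrightarrow> Ls i = line_pts (lv i) \<and> lv i \<noteq> (0, 0, 0)" using lv by blast
    show "\<And>i. i \<in> {1..s} \<Longrightarrow> Xs i \<subseteq> X \<and> card (Xs i) = d i \<and> Xs i \<subseteq> Ls i" using P by blast
    show "\<And>i j. i \<in> {1..s} \<Longrightarrow> j \<in> {1..s} \<Longrightarrow> i \<noteq> j \<Longrightarrow> Ls i \<noteq> Ls j" using D by blast
    show "\<And>i j. i \<in> {1..s} \<Longrightarrow> j \<in> {1..s} \<Longrightarrow> 1 < i \<Longrightarrow> j < i \<Longrightarrow> Ls i \<inter> Xs j = {}" using A by blast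
  qed
  have dh: "dhilb X (d s - 1) = int (tlen d s)" by (rule dhilb_res)
  have ct: "consec_tail s d = tlen d s" by (rule consec)
  have bound: "card {L. is_line L \<and> card (X \<inter> L) = d s} \<le> tlen d s + 1"
  proof (cases "s = 1 \<and> d 1 = 1")
    case True
    have "X = Xs 1" using XU True by simp
    moreover have "card (Xs 1) = 1" using P True by simp
    ultimately obtain p where p: "X = {p}" by (metis card_1_singletonE)
    have p0: "p \<noteq> (0, 0, 0)" using pps p by (simp add: proj_point_set_def)
    have "{L. is_line L \<and> card (X \<inter> L) = d s} = {L. is_line L \<and> p \<in> L}"
    proof -
      have "card ({p} \<inter> L) = 1 \<longleftrightarrow> p \<in> L" for L :: "'a pt set"
        by (cases "p \<in> L") auto
      then show ?thesis using p True by auto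
    qed
    then have "card {L. is_line L \<and> card (X \<inter> L) = d s} = 0"
      using infinite_lines_through[OF p0] by simp
    then show ?thesis by simp
  next
    case False
    then show ?thesis by (rule lines_bound)
  qed
  show ?thesis using dh ct bound by simp
qed

end
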